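(* Let $w$ be a weight on $(0,\infty)$ and $0<\alpha<1$. Then $\Gamma^1_\alpha(w)$ is a Banach space (i.e. its quasi-norm is equivalent to a norm) if and only if $w\in R_1$ and $\Gamma^1_\alpha(w)=\Lambda^1(w)$.
   Context: A weight is a nonnegative locally integrable measurable function on $(0,\infty)$. For a measurable function $f$ on $\mathbb{R}^n$, $f^*$ is its decreasing rearrangement and $f^{**}(t)=\frac1t\int_0^t f^*(s)\,ds$. $\Gamma^1_\alpha(w)$ is the set of $f$ with $\|f\|_{\Gamma^1_\alpha(w)}=\int_0^\infty (f^*(t))^\alpha(f^{**}(t))^{1-\alpha}w(t)\,dt<\infty$, and $\Lambda^1(w)$ the set of $f$ with $\|f\|_{\Lambda^1(w)}=\int_0^\infty f^*(t)w(t)\,dt<\infty$. Equality $X=Y$ of such spaces means they coincide with equivalent quasi-norms. $w\in R_1$ means there is $C$ with $\frac1s\int_0^s w\le\frac Cr\int_0^r w$ for all $0<r<s<\infty$. *)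

theory Defs
  imports "HOL-Analysis.Analysis"
begin

text \<open>Weights: nonnegative, measurable, locally integrable on (0,oo)
  (read as: integrable on every interval (0,t], so that W(t) is finite).\<close>
definition is_weight :: "(real \<Rightarrow> real) \<Rightarrow> bool" where
  "is_weight w \<longleftrightarrow> w \<in> borel_measurable lborel \<and> (\<forall>t>0. w t \<ge> 0)
     \<and> (\<forall>t>0. set_integrable lborel {0<..t} w)"

definition distrib_fun :: "('a::euclidean_space \<Rightarrow> real) \<Rightarrow> ennreal \<Rightarrow> ennreal" where
  "distrib_fun f lam = emeasure lebesgue {x. ennreal \<bar>f x\<bar> > lam}"

definition rearr :: "('a::euclidean_space \<Rightarrow> real) \<Rightarrow> real \<Rightarrow> ennreal" where
  "rearr f t = Inf {lam. distrib_fun f lam \<le> ennreal t}"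

definition max_rearr :: "('a::euclidean_space \<Rightarrow> real) \<Rightarrow> real \<Rightarrow> ennreal" where
  "max_rearr f t = ennreal (1 / t) * (\<integral>\<^sup>+ s\<in>{0<..<t}. rearr f s \<partial>lborel)"

definition epowr :: "ennreal \<Rightarrow> real \<Rightarrow> ennreal" where
  "epowr x a = (if x = \<infinity> then \<infinity> else ennreal (enn2real x powr a))"

definition Gamma_norm :: "real \<Rightarrow> (real \<Rightarrow> real) \<Rightarrow> ('a::euclidean_space \<Rightarrow> real) \<Rightarrow> ennreal" where
  "Gamma_norm \<alpha> w f = (\<integral>\<^sup>+ t\<in>{0<..}. epowr (rearr f t) \<alpha> * epowr (max_rearr f t) (1 - \<alpha>)
                              * ennreal (w t) \<partial>lborel)"

definition Lambda_norm :: "(real \<Rightarrow> real) \<Rightarrow> ('a::euclidean_space \<Rightarrow> real) \<Rightarrow> ennreal" where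
  "Lambda_norm w f = (\<integral>\<^sup>+ t\<in>{0<..}. rearr f t * ennreal (w t) \<partial>lborel)"

definition Gamma_space :: "real \<Rightarrow> (real \<Rightarrow> real) \<Rightarrow> ('a::euclidean_space \<Rightarrow> real) set" where
  "Gamma_space \<alpha> w = {f. f \<in> borel_measurable lebesgue \<and> Gamma_norm \<alpha> w f < \<infinity>}"

text \<open>X = Y with equivalent quasi-norms (for measurable functions; both sides are
  infinite outside the spaces).\<close>
definition Gamma_eq_Lambda :: "real \<Rightarrow> (real \<Rightarrow> real) \<Rightarrow> 'a::euclidean_space itself \<Rightarrow> bool" where
  "Gamma_eq_Lambda \<alpha> w _ \<longleftrightarrow> (\<exists>C>0. \<forall>f::'a \<Rightarrow> real. f \<in> borel_measurable lebesgue \<longrightarrow>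
      Gamma_norm \<alpha> w f \<le> ennreal C * Lambda_norm w f \<and> Lambda_norm w f \<le> ennreal C * Gamma_norm \<alpha> w f)"

definition R1 :: "(real \<Rightarrow> real) \<Rightarrow> bool" where
  "R1 w \<longleftrightarrow> (\<exists>C. \<forall>r s. 0 < r \<and> r < s \<longrightarrow>
      (1 / s) * (\<integral>x\<in>{0<..s}. w x \<partial>lborel) \<le> (C / r) * (\<integral>x\<in>{0<..r}. w x \<partial>lborel))"

definition Gamma_normable :: "real \<Rightarrow> (real \<Rightarrow> real) \<Rightarrow> 'a::euclidean_space itself \<Rightarrow> bool" where
  "Gamma_normable \<alpha> w _ \<longleftrightarrow> (\<exists>N :: ('a \<Rightarrow> real) \<Rightarrow> real.
      (\<forall>f\<in>Gamma_space \<alpha> w. \<forall>g\<in>Gamma_space \<alpha> w. N (\<lambda>x. f x + g x) \<le> N f + N g)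
    \<and> (\<forall>f\<in>Gamma_space \<alpha> w. \<forall>c. N (\<lambda>x. c * f x) = \<bar>c\<bar> * N f)
    \<and> (\<exists>c C. c > 0 \<and> C > 0 \<and> (\<forall>f\<in>Gamma_space \<alpha> w.
          c * enn2real (Gamma_norm \<alpha> w f) \<le> N f \<and> N f \<le> C * enn2real (Gamma_norm \<alpha> w f))))"

end

theory Submission
  imports Defs
begin


lemma distrib_set_meas:
  assumes f: "f \<in> borel_measurable lebesgue"
  shows "{x. l < ennreal \<bar>f x\<bar>} \<in> sets lebesgue"
proof -
  have "{x. l < ennreal \<bar>f x\<bar>} = {x \<in> space lebesgue. l < ennreal \<bar>f x\<bar>}" by simp
  also have "\<dots> \<in> sets lebesgue" using f by measurable
  finally show ?thesis .
qed

lemma distrib_antimono: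
  assumes f: "f \<in> borel_measurable lebesgue" and "l \<le> m"
  shows "distrib_fun f m \<le> distrib_fun f l"
  unfolding distrib_fun_def
  by (rule emeasure_mono) (use assms distrib_set_meas[OF f] in \<open>auto intro: order.strict_trans1\<close>)

lemma distrib_infty: "distrib_fun f \<infinity> = 0"
  unfolding distrib_fun_def by simp

lemma distrib_rc:
  assumes f: "f \<in> borel_measurable lebesgue" and t: "t < distrib_fun f l"
  shows "\<exists>m>l. t < distrib_fun f m"
proof (cases "l = \<infinity>")
  case True then show ?thesis using t by (simp add: distrib_fun_def)
next
  case False
  then obtain r where r: "l = ennreal r" "r \<ge> 0" by (cases l) auto
  define A where "A n = {x. ennreal (r + 1 / Suc n) < ennreal \<bar>f x\<bar>}" for n :: nat
  have A_sets: "range A \<subseteq> sets lebesgue" unfolding A_def using distrib_set_meas[OF f] by auto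
  have "incseq A"
  proof (rule incseq_SucI)
    fix n
    have le: "ennreal (r + 1 / Suc (Suc n)) \<le> ennreal (r + 1 / Suc n)"
      by (rule ennreal_leI) (simp add: frac_le)
    show "A n \<subseteq> A (Suc n)" unfolding A_def
      using le order.strict_trans1 by blast
  qed
  have U: "(\<Union> (range A)) = {x. l < ennreal \<bar>f x\<bar>}"
  proof (intro set_eqI iffI)
    fix x assume "x \<in> \<Union> (range A)"
    then obtain n where "ennreal (r + 1 / Suc n) < ennreal \<bar>f x\<bar>" unfolding A_def by auto
    moreover have "ennreal r \<le> ennreal (r + 1 / Suc n)" by (rule ennreal_leI) simp
    ultimately have "ennreal r < ennreal \<bar>f x\<bar>" using order.strict_trans1 by blast
    then show "x \<in> {x. l < ennreal \<bar>f x\<bar>}" using r by simp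
  next
    fix x assume "x \<in> {x. l < ennreal \<bar>f x\<bar>}"
    then have "r < \<bar>f x\<bar>" using r by (simp add: ennreal_less_iff)
    then obtain n where n: "1 / Suc n < \<bar>f x\<bar> - r"
      by (metis diff_gt_0_iff_gt nat_approx_posE)
    then have "ennreal (r + 1 / Suc n) < ennreal \<bar>f x\<bar>"
      using r by (subst ennreal_less_iff) auto
    then show "x \<in> \<Union> (range A)" unfolding A_def by auto
  qed
  have "distrib_fun f l = (SUP n. emeasure lebesgue (A n))"
    unfolding distrib_fun_def using SUP_emeasure_incseq[OF A_sets \<open>incseq A\<close>] U by simp
  with t obtain n where "t < emeasure lebesgue (A n)" by (auto simp: less_SUP_iff)
  moreover have "emeasure lebesgue (A n) = distrib_fun f (ennreal (r + 1 / Suc n))"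
    unfolding A_def distrib_fun_def ..
  moreover have "l < ennreal (r + 1 / Suc n)" using r by (simp add: ennreal_less_iff)
  ultimately show ?thesis by (metis (no_types))
qed

lemma rearr_less_iff:
  assumes f: "f \<in> borel_measurable lebesgue"
  shows "(l < rearr f t) \<longleftrightarrow> (ennreal t < distrib_fun f l)"
proof
  assume "l < rearr f t"
  then have "l \<notin> {lam. distrib_fun f lam \<le> ennreal t}"
    unfolding rearr_def by (metis Inf_lower leD)
  then show "ennreal t < distrib_fun f l" by auto
next
  assume "ennreal t < distrib_fun f l"
  then obtain m where m: "m > l" "ennreal t < distrib_fun f m" using distrib_rc[OF f] by blast
  have "m \<le> rearr f t" unfolding rearr_def
  proof (rule Inf_greatest)
    fix n assume "n \<in> {lam. distrib_fun f lam \<le> ennreal t}"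
    then have "distrib_fun f n \<le> ennreal t" by simp
    show "m \<le> n"
    proof (rule ccontr)
      assume "\<not> m \<le> n"
      then have "distrib_fun f m \<le> distrib_fun f n" using distrib_antimono[OF f, of n m] by simp
      then show False using m \<open>distrib_fun f n \<le> ennreal t\<close> by simp
    qed
  qed
  then show "l < rearr f t" using m by simp
qed

lemma rearr_antimono:
  assumes "t \<le> t'" shows "rearr f t' \<le> rearr f t"
  unfolding rearr_def
  by (rule Inf_superset_mono) (use assms in \<open>auto intro: order.trans ennreal_leI\<close>)

lemma distrib_mono_fun:
  assumes f: "f \<in> borel_measurable lebesgue" and le: "\<And>x. \<bar>g x\<bar> \<le> \<bar>f x\<bar>"
  shows "distrib_fun g l \<le> distrib_fun f l"
  unfolding distrib_fun_def
  by (rule emeasure_mono) (use distrib_set_meas[OF f] le in \<open>auto intro: order.strict_trans2\<close>)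

lemma rearr_mono_fun:
  assumes f: "f \<in> borel_measurable lebesgue" and le: "\<And>x. \<bar>g x\<bar> \<le> \<bar>f x\<bar>"
  shows "rearr g t \<le> rearr f t"
  unfolding rearr_def
  by (rule Inf_superset_mono) (use distrib_mono_fun[OF f le] in \<open>auto intro: order.trans\<close>)

lemma rearr_measurable[measurable]:
  assumes f: "f \<in> borel_measurable lebesgue"
  shows "rearr f \<in> borel_measurable borel"
proof (rule borel_measurableI_greater)
  fix y
  have "{x \<in> space borel. y < rearr f x} = {x. ennreal x < distrib_fun f y}"
    using rearr_less_iff[OF f] by auto
  also have "\<dots> \<in> sets borel" by measurable
  finally show "{x \<in> space borel. y < rearr f x} \<in> sets borel" .
qed


lemma epowr_mono:
  assumes "x \<le> y" "a > 0" shows "epowr x a \<le> epowr y a"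
  using assms unfolding epowr_def
  by (cases x; cases y) (auto intro!: ennreal_leI powr_mono2 simp: top_unique)

lemma epowr_zero[simp]: "a > 0 \<Longrightarrow> epowr 0 a = 0"
  unfolding epowr_def by simp

lemma epowr_pos: "a > 0 \<Longrightarrow> x > 0 \<Longrightarrow> epowr x a > 0"
  unfolding epowr_def by (cases x) (auto simp: ennreal_less_iff)

lemma epowr_ennreal: "r \<ge> 0 \<Longrightarrow> epowr (ennreal r) a = ennreal (r powr a)"
  unfolding epowr_def by simp

lemma epowr_prod_ge:
  assumes "x \<le> y" "0 < \<alpha>" "\<alpha> < 1"
  shows "x \<le> epowr x \<alpha> * epowr y (1 - \<alpha>)"
proof (cases "y = \<infinity>")
  case True
  show ?thesis
  proof (cases "x = 0")
    case False
    then have "x > 0" by (simp add: zero_less_iff_neq_zero)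
    then have "epowr x \<alpha> > 0" using epowr_pos assms by auto
    then show ?thesis using True assms unfolding epowr_def by (auto simp: ennreal_mult_top)
  qed simp
next
  case False
  then obtain a b where ab: "x = ennreal a" "y = ennreal b" "a \<ge> 0" "b \<ge> 0" "a \<le> b"
    using assms(1) by (cases x; cases y) (auto simp: top_unique)
  have "a = a powr \<alpha> * a powr (1 - \<alpha>)"
    using ab by (cases "a = 0") (auto simp: powr_add[symmetric] assms)
  also have "\<dots> \<le> a powr \<alpha> * b powr (1 - \<alpha>)"
    using ab assms by (intro mult_left_mono powr_mono2) auto
  finally show ?thesis using ab by (simp add: epowr_ennreal ennreal_mult[symmetric] ennreal_leI)
qed

lemma max_rearr_ge:
  assumes "t > 0" shows "rearr f t \<le> max_rearr f t"
proof -
  have "(\<integral>\<^sup>+ s\<in>{0<..<t}. rearr f t \<partial>lborel) \<le> (\<integral>\<^sup>+ s\<in>{0<..<t}. rearr f s \<partial>lborel)"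
    by (intro nn_integral_mono) (auto simp: indicator_def intro: rearr_antimono)
  moreover have "(\<integral>\<^sup>+ s\<in>{0<..<t}. rearr f t \<partial>lborel) = rearr f t * ennreal t"
    using assms by (simp add: nn_integral_cmult_indicator)
  ultimately have "ennreal (1/t) * (rearr f t * ennreal t) \<le> max_rearr f t"
    unfolding max_rearr_def by (intro mult_left_mono) auto
  moreover have "ennreal (1/t) * ennreal t = 1" using assms by (simp add: ennreal_mult[symmetric])
  then have "ennreal (1/t) * (rearr f t * ennreal t) = rearr f t"
    by (metis mult.assoc mult.commute mult_1)
  ultimately show ?thesis by simp
qed

lemma max_rearr_mono_fun:
  assumes f: "f \<in> borel_measurable lebesgue" and le: "\<And>x. \<bar>g x\<bar> \<le> \<bar>f x\<bar>"
  shows "max_rearr g t \<le> max_rearr f t"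
  unfolding max_rearr_def
  by (intro mult_left_mono nn_integral_mono) (auto simp: indicator_def intro: rearr_mono_fun[OF f le])

lemma Gamma_mono_fun:
  assumes f: "f \<in> borel_measurable lebesgue" and le: "\<And>x. \<bar>g x\<bar> \<le> \<bar>f x\<bar>" and a: "0 < \<alpha>" "\<alpha> < 1"
  shows "Gamma_norm \<alpha> w g \<le> Gamma_norm \<alpha> w f"
  unfolding Gamma_norm_def
  by (intro nn_integral_mono mult_right_mono mult_mono epowr_mono rearr_mono_fun[OF f le]
        max_rearr_mono_fun[OF f le]) (use a in \<open>auto simp: indicator_def\<close>)

lemma Lambda_mono_fun:
  assumes f: "f \<in> borel_measurable lebesgue" and le: "\<And>x. \<bar>g x\<bar> \<le> \<bar>f x\<bar>"
  shows "Lambda_norm w g \<le> Lambda_norm w f"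
  unfolding Lambda_norm_def
  by (intro nn_integral_mono mult_right_mono rearr_mono_fun[OF f le]) (auto simp: indicator_def)

lemma Lambda_le_Gamma:
  assumes a: "0 < \<alpha>" "\<alpha> < 1"
  shows "Lambda_norm w f \<le> Gamma_norm \<alpha> w f"
  unfolding Lambda_norm_def Gamma_norm_def
proof (intro nn_integral_mono)
  fix t :: real
  show "rearr f t * ennreal (w t) * indicator {0<..} t
    \<le> epowr (rearr f t) \<alpha> * epowr (max_rearr f t) (1 - \<alpha>) * ennreal (w t) * indicator {0<..} t"
  proof (cases "t > 0")
    case True
    then show ?thesis by (auto intro!: mult_right_mono epowr_prod_ge max_rearr_ge a)
  qed simp
qed


definition Wb :: "(real \<Rightarrow> real) \<Rightarrow> ennreal \<Rightarrow> ennreal" where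
  "Wb w u = (\<integral>\<^sup>+ t\<in>{0<..}. indicator {t. ennreal t < u} t * ennreal (w t) \<partial>lborel)"

lemma emeasure_lborel_Ici_top: "emeasure lborel {0::real..} = \<infinity>"
proof (rule ccontr)
  assume "emeasure lborel {0::real..} \<noteq> \<infinity>"
  then obtain r where r: "emeasure lborel {0::real..} = ennreal r" "r \<ge> 0"
    by (cases "emeasure lborel {0::real..}") auto
  obtain n :: nat where n: "r < n" using reals_Archimedean2 by blast
  have "emeasure lborel {0::real..<n} \<le> emeasure lborel {0::real..}"
    by (rule emeasure_mono) auto
  then have "ennreal n \<le> ennreal r" using r by simp
  then show False using n r by (simp add: ennreal_le_iff)
qed

lemma emeasure_below_ennreal: "emeasure lborel {l. 0 \<le> l \<and> ennreal l < x} = x"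
proof (cases x)
  case (real r)
  then have "{l. 0 \<le> l \<and> ennreal l < x} = {0..<r}"
    by (auto simp: ennreal_less_iff)
  then show ?thesis using real by simp
next
  case top
  then have "{l. 0 \<le> l \<and> ennreal l < x} = {0..}" by auto
  then show ?thesis using top by (simp add: emeasure_lborel_Ici_top)
qed

lemma layer_cake_Lambda:
  assumes f: "f \<in> borel_measurable lebesgue" and wm: "w \<in> borel_measurable borel"
  shows "Lambda_norm w f = (\<integral>\<^sup>+ l\<in>{0..}. Wb w (distrib_fun f (ennreal l)) \<partial>lborel)"
proof -
  have rm[measurable]: "rearr f \<in> borel_measurable borel" using rearr_measurable[OF f] .
  have wm'[measurable]: "w \<in> borel_measurable lborel" using wm by simp
  note [measurable] = f wm
  define F where "F t l = indicator {l. 0 \<le> l \<and> ennreal l < rearr f t} l * (ennreal (w t) * indicator {0<..} t)" for t l :: real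
  have "Lambda_norm w f = (\<integral>\<^sup>+ t. (\<integral>\<^sup>+ l. F t l \<partial>lborel) \<partial>lborel)"
    unfolding Lambda_norm_def F_def
  proof (intro nn_integral_cong)
    fix t :: real
    have Sm: "{l::real. 0 \<le> l \<and> ennreal l < rearr f t} \<in> sets lborel" by measurable
    have "(\<integral>\<^sup>+ l. indicator {l. 0 \<le> l \<and> ennreal l < rearr f t} l * (ennreal (w t) * indicator {0<..} t) \<partial>lborel)
       = (\<integral>\<^sup>+ l. indicator {l. 0 \<le> l \<and> ennreal l < rearr f t} l \<partial>lborel) * (ennreal (w t) * indicator {0<..} t)"
      by (rule nn_integral_multc) (use Sm in simp)
    also have "\<dots> = rearr f t * (ennreal (w t) * indicator {0<..} t)"
      using Sm by (simp add: emeasure_below_ennreal)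
    finally show "rearr f t * ennreal (w t) * indicator {0<..} t =
      (\<integral>\<^sup>+ l. indicator {l. 0 \<le> l \<and> ennreal l < rearr f t} l * (ennreal (w t) * indicator {0<..} t) \<partial>lborel)"
      by (simp add: ac_simps)
  qed
  also have "\<dots> = (\<integral>\<^sup>+ l. (\<integral>\<^sup>+ t. F t l \<partial>lborel) \<partial>lborel)"
  proof (rule lborel_pair.Fubini'[symmetric])
    show "(\<lambda>(x, y). F x y) \<in> borel_measurable (lborel \<Otimes>\<^sub>M lborel)"
      unfolding F_def by measurable
  qed
  also have "\<dots> = (\<integral>\<^sup>+ l\<in>{0..}. Wb w (distrib_fun f (ennreal l)) \<partial>lborel)"
  proof (intro nn_integral_cong)
    fix l :: real
    show "(\<integral>\<^sup>+ t. F t l \<partial>lborel) = Wb w (distrib_fun f (ennreal l)) * indicator {0..} l"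
    proof (cases "l \<ge> 0")
      case True
      have "(\<integral>\<^sup>+ t. F t l \<partial>lborel) = Wb w (distrib_fun f (ennreal l))"
        unfolding Wb_def F_def using True
        by (intro nn_integral_cong) (auto simp: indicator_def rearr_less_iff[OF f])
      then show ?thesis using True by simp
    next
      case False
      then show ?thesis unfolding F_def by (simp add: indicator_def)
    qed
  qed
  finally show ?thesis .
qed



lemma Wb_ennreal:
  assumes "m \<ge> 0" shows "Wb w (ennreal m) = (\<integral>\<^sup>+ t\<in>{0<..<m}. ennreal (w t) \<partial>lborel)"
  unfolding Wb_def
  by (intro nn_integral_cong) (use assms in \<open>auto simp: indicator_def ennreal_less_iff\<close>)

lemma Wb_mono: "u \<le> v \<Longrightarrow> Wb w u \<le> Wb w v"
  unfolding Wb_def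
  by (intro nn_integral_mono) (auto simp: indicator_def intro: order.strict_trans2)

lemma distrib_ind:
  fixes E :: "'a::euclidean_space set"
  assumes "a > 0"
  shows "distrib_fun (\<lambda>x. a * indicator E x) l = (if l < ennreal a then emeasure lebesgue E else 0)"
proof -
  have "{x. l < ennreal \<bar>a * indicator E x\<bar>} = (if l < ennreal a then E else {})"
    using assms by (auto simp: indicator_def)
  then show ?thesis unfolding distrib_fun_def by simp
qed

lemma rearr_ind:
  fixes E :: "'a::euclidean_space set"
  assumes a: "a > 0" and E: "E \<in> sets lebesgue" and t: "t \<ge> 0"
  shows "rearr (\<lambda>x. a * indicator E x) t = (if ennreal t < emeasure lebesgue E then ennreal a else 0)"
proof -
  let ?f = "\<lambda>x. a * indicator E x"
  have fm: "?f \<in> borel_measurable lebesgue" using E by measurable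
  show ?thesis
  proof (cases "ennreal t < emeasure lebesgue E")
    case True
    have "rearr ?f t \<le> ennreal a" unfolding rearr_def
      by (rule Inf_lower) (simp add: distrib_ind a)
    moreover have "ennreal a \<le> rearr ?f t"
    proof (rule dense_le)
      fix y assume "y < ennreal a"
      then have "y < rearr ?f t" using rearr_less_iff[OF fm] True by (simp add: distrib_ind a)
      then show "y \<le> rearr ?f t" by simp
    qed
    ultimately show ?thesis using True by simp
  next
    case False
    have "rearr ?f t \<le> 0" unfolding rearr_def
      by (rule Inf_lower) (use False a in \<open>simp add: distrib_ind not_less\<close>)
    then show ?thesis using False by simp
  qed
qed

lemma max_rearr_ind:
  fixes E :: "'a::euclidean_space set"
  assumes a: "a > 0" and E: "E \<in> sets lebesgue" and t: "t > 0" "ennreal t < emeasure lebesgue E"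
  shows "max_rearr (\<lambda>x. a * indicator E x) t = ennreal a"
proof -
  have "(\<integral>\<^sup>+ s\<in>{0<..<t}. rearr (\<lambda>x. a * indicator E x) s \<partial>lborel) = (\<integral>\<^sup>+ s\<in>{0<..<t}. ennreal a \<partial>lborel)"
  proof (intro nn_integral_cong)
    fix s
    show "rearr (\<lambda>x. a * indicator E x) s * indicator {0<..<t} s = ennreal a * indicator {0<..<t} s"
    proof (cases "s \<in> {0<..<t}")
      case True
      then have "ennreal s < emeasure lebesgue E"
        using t by (meson ennreal_lessI greaterThanLessThan_iff order.strict_trans) 
      then show ?thesis using True rearr_ind[OF a E, of s] by simp
    qed simp
  qed
  also have "\<dots> = ennreal a * ennreal t" using t by (simp add: nn_integral_cmult_indicator)
  moreover have "ennreal (1/t) * (ennreal a * ennreal t) = ennreal (1/t * (a * t))"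
    using t a by (metis ennreal_mult less_imp_le divide_nonneg_nonneg zero_le_one mult_nonneg_nonneg)
  ultimately show ?thesis unfolding max_rearr_def using t by simp
qed

lemma Gamma_ind:
  fixes E :: "'a::euclidean_space set"
  assumes a: "a > 0" and E: "E \<in> sets lebesgue" and al: "0 < \<alpha>" "\<alpha> < 1"
    and wm: "w \<in> borel_measurable borel"
  shows "Gamma_norm \<alpha> w (\<lambda>x. a * indicator E x) = ennreal a * Wb w (emeasure lebesgue E)"
proof -
  have "Gamma_norm \<alpha> w (\<lambda>x. a * indicator E x) =
        (\<integral>\<^sup>+ t. ennreal a * (indicator {t. ennreal t < emeasure lebesgue E} t * ennreal (w t)) * indicator {0<..} t \<partial>lborel)"
    unfolding Gamma_norm_def
  proof (intro nn_integral_cong)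
    fix t
    show "epowr (rearr (\<lambda>x. a * indicator E x) t) \<alpha> * epowr (max_rearr (\<lambda>x. a * indicator E x) t) (1 - \<alpha>) * ennreal (w t) * indicator {0<..} t =
         ennreal a * (indicator {t. ennreal t < emeasure lebesgue E} t * ennreal (w t)) * indicator {0<..} t"
    proof (cases "t > 0")
      case True
      show ?thesis
      proof (cases "ennreal t < emeasure lebesgue E")
        case True2: True
        have "epowr (ennreal a) \<alpha> * epowr (ennreal a) (1 - \<alpha>) = ennreal a"
          using a al by (simp add: epowr_def ennreal_mult[symmetric] powr_add[symmetric])
        then show ?thesis using True True2 rearr_ind[OF a E, of t] max_rearr_ind[OF a E True True2]
          by simp
      next
        case False
        then show ?thesis using True rearr_ind[OF a E, of t] al by (simp add: epowr_def)
      qed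
    qed simp
  qed
  also have "\<dots> = ennreal a * Wb w (emeasure lebesgue E)"
    unfolding Wb_def by (subst nn_integral_cmult[symmetric]) (use wm in \<open>auto simp: ac_simps\<close>)
  finally show ?thesis .
qed

lemma Lambda_ind:
  fixes E :: "'a::euclidean_space set"
  assumes a: "a > 0" and E: "E \<in> sets lebesgue" and wm: "w \<in> borel_measurable borel"
  shows "Lambda_norm w (\<lambda>x. a * indicator E x) = ennreal a * Wb w (emeasure lebesgue E)"
proof -
  have "Lambda_norm w (\<lambda>x. a * indicator E x) =
        (\<integral>\<^sup>+ t. ennreal a * (indicator {t. ennreal t < emeasure lebesgue E} t * ennreal (w t)) * indicator {0<..} t \<partial>lborel)"
    unfolding Lambda_norm_def
  proof (intro nn_integral_cong)
    fix t
    show "rearr (\<lambda>x. a * indicator E x) t * ennreal (w t) * indicator {0<..} t =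
         ennreal a * (indicator {t. ennreal t < emeasure lebesgue E} t * ennreal (w t)) * indicator {0<..} t"
      by (cases "t > 0") (auto simp: rearr_ind[OF a E])
  qed
  also have "\<dots> = ennreal a * Wb w (emeasure lebesgue E)"
    unfolding Wb_def by (subst nn_integral_cmult[symmetric]) (use wm in \<open>auto simp: ac_simps\<close>)
  finally show ?thesis .
qed


lemma antimono_borel:
  fixes g :: "real \<Rightarrow> ennreal"
  assumes am: "\<And>x y. x \<le> y \<Longrightarrow> g y \<le> g x"
  shows "g \<in> borel_measurable borel"
proof (rule borel_measurableI_greater)
  fix y
  define D where "D = {x. y < g x}"
  have down: "x \<in> D" if "z \<in> D" "x \<le> z" for x z
    using that am[of x z] unfolding D_def by (auto intro: order.strict_trans2)
  have "D \<in> sets borel"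
  proof (cases "D = UNIV \<or> D = {}")
    case True then show ?thesis by auto
  next
    case False
    then obtain z where z: "z \<notin> D" and ne: "D \<noteq> {}" by auto
    have bdd: "bdd_above D"
    proof (rule bdd_aboveI)
      fix x assume "x \<in> D" then show "x \<le> z" using z down[of x z] by (metis linear)
    qed
    define s where "s = Sup D"
    have "D = {..<s} \<union> (D \<inter> {s})"
    proof (intro set_eqI iffI)
      fix x assume x: "x \<in> D"
      then have "x \<le> s" unfolding s_def using bdd by (simp add: cSup_upper)
      then show "x \<in> {..<s} \<union> (D \<inter> {s})" using x by auto
    next
      fix x assume "x \<in> {..<s} \<union> (D \<inter> {s})"
      then show "x \<in> D"
      proof
        assume "x \<in> {..<s}"
        then obtain d where "d \<in> D" "x < d" unfolding s_def using less_cSup_iff[OF ne bdd] by auto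
        then show "x \<in> D" using down by auto
      qed auto
    qed
    moreover have "D \<inter> {s} \<in> sets borel" by (cases "s \<in> D") auto
    ultimately show ?thesis by (metis sets.Un atMost_borel lessThan_borel)
  qed
  then show "{x \<in> space borel. y < g x} \<in> sets borel" unfolding D_def by simp
qed

lemma distrib_measurable:
  assumes f: "f \<in> borel_measurable lebesgue"
  shows "(\<lambda>l. distrib_fun f (ennreal l)) \<in> borel_measurable borel"
  by (rule antimono_borel) (intro distrib_antimono[OF f] ennreal_leI)

lemma sigma_finite_lebesgue: "sigma_finite_measure (lebesgue :: 'a::euclidean_space measure)"
proof -
  obtain A :: "'a set set" where A: "countable A" "A \<subseteq> sets lborel" "\<Union>A = space lborel"
      "\<forall>a\<in>A. emeasure lborel a \<noteq> \<infinity>"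
    using sigma_finite_measure.sigma_finite_countable[OF sigma_finite_lborel] by blast
  show ?thesis
  proof
    show "\<exists>A. countable A \<and> A \<subseteq> sets lebesgue \<and> \<Union> A = space (lebesgue :: 'a measure) \<and> (\<forall>a\<in>A. emeasure lebesgue a \<noteq> \<infinity>)"
      using A by (intro exI[of _ A]) (auto simp: subset_eq)
  qed
qed

interpretation leb_pair: pair_sigma_finite "lebesgue :: 'a::euclidean_space measure" lborel
  by (intro pair_sigma_finite.intro sigma_finite_lebesgue sigma_finite_lborel)

definition Phi :: "real \<Rightarrow> ('a::euclidean_space \<Rightarrow> real) \<Rightarrow> ennreal" where
  "Phi t f = (\<integral>\<^sup>+ l\<in>{0..}. min (distrib_fun f (ennreal l)) (ennreal t) \<partial>lborel)"

lemma excess_integral: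
  fixes f :: "'a::euclidean_space \<Rightarrow> real"
  assumes f[measurable]: "f \<in> borel_measurable lebesgue" and c: "c \<ge> 0"
  shows "(\<integral>\<^sup>+ l\<in>{c<..}. distrib_fun f (ennreal l) \<partial>lborel) = (\<integral>\<^sup>+ x. ennreal (max 0 (\<bar>f x\<bar> - c)) \<partial>lebesgue)"
proof -
  define G :: "'a \<Rightarrow> real \<Rightarrow> ennreal" where "G x l = indicator {c<..} l * indicator {l. l < \<bar>f x\<bar>} l" for x l
  have "(\<integral>\<^sup>+ l\<in>{c<..}. distrib_fun f (ennreal l) \<partial>lborel) = (\<integral>\<^sup>+ l. (\<integral>\<^sup>+ x. G x l \<partial>lebesgue) \<partial>lborel)"
  proof (intro nn_integral_cong)
    fix l :: real
    show "distrib_fun f (ennreal l) * indicator {c<..} l = (\<integral>\<^sup>+ x. G x l \<partial>lebesgue)"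
    proof (cases "c < l")
      case True
      have "{x. ennreal l < ennreal \<bar>f x\<bar>} = {x. l < \<bar>f x\<bar>}" using True c by (auto simp: ennreal_less_iff)
      moreover have "{x. l < \<bar>f x\<bar>} \<in> sets lebesgue"
      proof -
        have "{x. l < \<bar>f x\<bar>} = {x \<in> space lebesgue. l < \<bar>f x\<bar>}" by simp
        also have "\<dots> \<in> sets lebesgue" by measurable
        finally show ?thesis .
      qed
      moreover have "(\<integral>\<^sup>+ x. G x l \<partial>lebesgue) = (\<integral>\<^sup>+ x. indicator {x. l < \<bar>f x\<bar>} x \<partial>lebesgue)"
        unfolding G_def using True by (intro nn_integral_cong) (auto simp: indicator_def)
      ultimately show ?thesis unfolding distrib_fun_def using True
        by (simp del: emeasure_completion)
    qed (simp add: G_def)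
  qed
  also have "\<dots> = (\<integral>\<^sup>+ x. (\<integral>\<^sup>+ l. G x l \<partial>lborel) \<partial>lebesgue)"
    by (rule leb_pair.Fubini') (unfold G_def, measurable)
  also have "\<dots> = (\<integral>\<^sup>+ x. ennreal (max 0 (\<bar>f x\<bar> - c)) \<partial>lebesgue)"
  proof (intro nn_integral_cong)
    fix x
    have "(\<integral>\<^sup>+ l. G x l \<partial>lborel) = (\<integral>\<^sup>+ l. indicator {c<..<\<bar>f x\<bar>} l \<partial>lborel)"
      unfolding G_def by (intro nn_integral_cong) (auto simp: indicator_def)
    also have "\<dots> = ennreal (max 0 (\<bar>f x\<bar> - c))"
      by (cases "c \<le> \<bar>f x\<bar>") (auto simp: max_def)
    finally show "(\<integral>\<^sup>+ l. G x l \<partial>lborel) = ennreal (max 0 (\<bar>f x\<bar> - c))" .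
  qed
  finally show ?thesis .
qed

lemma Phi_upper:
  fixes f :: "'a::euclidean_space \<Rightarrow> real"
  assumes f[measurable]: "f \<in> borel_measurable lebesgue" and c: "c \<ge> 0" and t: "t \<ge> 0"
  shows "Phi t f \<le> ennreal (c * t) + (\<integral>\<^sup>+ x. ennreal (max 0 (\<bar>f x\<bar> - c)) \<partial>lebesgue)"
proof -
  have dm[measurable]: "(\<lambda>l. distrib_fun f (ennreal l)) \<in> borel_measurable borel"
    using distrib_measurable[OF f] .
  have "Phi t f \<le> (\<integral>\<^sup>+ l. ennreal t * indicator {0..c} l + distrib_fun f (ennreal l) * indicator {c<..} l \<partial>lborel)"
    unfolding Phi_def by (intro nn_integral_mono) (auto simp: indicator_def)
  also have "\<dots> = (\<integral>\<^sup>+ l. ennreal t * indicator {0..c} l \<partial>lborel) + (\<integral>\<^sup>+ l\<in>{c<..}. distrib_fun f (ennreal l) \<partial>lborel)"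
    by (rule nn_integral_add) auto
  also have "(\<integral>\<^sup>+ l. ennreal t * indicator {0..c} l \<partial>lborel) = ennreal (c * t)"
    using c t by (simp add: nn_integral_cmult_indicator ennreal_mult[symmetric] mult.commute)
  finally show ?thesis using excess_integral[OF f c] by simp
qed

lemma Phi_exact:
  fixes f :: "'a::euclidean_space \<Rightarrow> real"
  assumes f[measurable]: "f \<in> borel_measurable lebesgue" and t: "t > 0"
  shows "rearr f t = \<infinity> \<Longrightarrow> Phi t f = \<infinity>"
    and "rearr f t = ennreal c \<Longrightarrow> c \<ge> 0 \<Longrightarrow>
         ennreal (c * t) + (\<integral>\<^sup>+ x. ennreal (max 0 (\<bar>f x\<bar> - c)) \<partial>lebesgue) \<le> Phi t f"
proof -
  have dm[measurable]: "(\<lambda>l. distrib_fun f (ennreal l)) \<in> borel_measurable borel"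
    using distrib_measurable[OF f] .
  assume inf: "rearr f t = \<infinity>"
  have "Phi t f = (\<integral>\<^sup>+ l\<in>{0::real..}. ennreal t \<partial>lborel)"
    unfolding Phi_def
  proof (intro nn_integral_cong)
    fix l :: real
    have "ennreal l < rearr f t" using inf by simp
    then have "ennreal t < distrib_fun f (ennreal l)" using rearr_less_iff[OF f] by blast
    then show "min (distrib_fun f (ennreal l)) (ennreal t) * indicator {0..} l = ennreal t * indicator {0..} l"
      by simp
  qed
  also have "\<dots> = \<infinity>" using t by (simp add: nn_integral_cmult_indicator emeasure_lborel_Ici_top ennreal_mult_top)
  finally show "Phi t f = \<infinity>" .
next
  have dm[measurable]: "(\<lambda>l. distrib_fun f (ennreal l)) \<in> borel_measurable borel"
    using distrib_measurable[OF f] .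
  assume r: "rearr f t = ennreal c" and c: "c \<ge> 0"
  have "(\<integral>\<^sup>+ l. ennreal t * indicator {0..<c} l + distrib_fun f (ennreal l) * indicator {c<..} l \<partial>lborel) \<le> Phi t f"
    unfolding Phi_def
  proof (intro nn_integral_mono)
    fix l :: real
    show "ennreal t * indicator {0..<c} l + distrib_fun f (ennreal l) * indicator {c<..} l
      \<le> min (distrib_fun f (ennreal l)) (ennreal t) * indicator {0..} l"
    proof (cases "0 \<le> l \<and> l < c")
      case True
      then have "ennreal l < rearr f t" using r c by (auto simp: ennreal_less_iff)
      then have "ennreal t < distrib_fun f (ennreal l)" using rearr_less_iff[OF f] by blast
      then show ?thesis using True by (auto simp: indicator_def)
    next
      case False
      show ?thesis
      proof (cases "c < l")
        case True
        then have "\<not> ennreal l < rearr f t" using r c by (simp add: ennreal_less_iff)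
        then have "distrib_fun f (ennreal l) \<le> ennreal t" using rearr_less_iff[OF f] by (simp add: not_less)
        then show ?thesis using True c False by (auto simp: indicator_def)
      next
        case False2: False
        then show ?thesis using False by (auto simp: indicator_def)
      qed
    qed
  qed
  moreover have "(\<integral>\<^sup>+ l. ennreal t * indicator {0..<c} l + distrib_fun f (ennreal l) * indicator {c<..} l \<partial>lborel)
      = ennreal (c * t) + (\<integral>\<^sup>+ x. ennreal (max 0 (\<bar>f x\<bar> - c)) \<partial>lebesgue)"
  proof -
    have "(\<integral>\<^sup>+ l. ennreal t * indicator {0..<c} l + distrib_fun f (ennreal l) * indicator {c<..} l \<partial>lborel)
      = (\<integral>\<^sup>+ l. ennreal t * indicator {0..<c} l \<partial>lborel) + (\<integral>\<^sup>+ l\<in>{c<..}. distrib_fun f (ennreal l) \<partial>lborel)"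
      by (rule nn_integral_add) auto
    also have "(\<integral>\<^sup>+ l. ennreal t * indicator {0..<c} l \<partial>lborel) = ennreal (c * t)"
      using c t by (simp add: nn_integral_cmult_indicator ennreal_mult[symmetric] mult.commute)
    finally show ?thesis using excess_integral[OF f c] by simp
  qed
  ultimately show "ennreal (c * t) + (\<integral>\<^sup>+ x. ennreal (max 0 (\<bar>f x\<bar> - c)) \<partial>lebesgue) \<le> Phi t f" by simp
qed

lemma Phi_subadd:
  fixes f g :: "'a::euclidean_space \<Rightarrow> real"
  assumes f[measurable]: "f \<in> borel_measurable lebesgue" and g[measurable]: "g \<in> borel_measurable lebesgue"
    and t: "t \<ge> 0"
  shows "Phi t (\<lambda>x. f x + g x) \<le> Phi t f + Phi t g"
proof (cases "t = 0")
  case True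
  then show ?thesis unfolding Phi_def by simp
next
  case False
  then have t: "t > 0" using t by simp
  show ?thesis
  proof (cases "rearr f t = \<infinity> \<or> rearr g t = \<infinity>")
    case True
    then show ?thesis using Phi_exact(1)[OF f t] Phi_exact(1)[OF g t] by auto
  next
    case False
    then have nf: "rearr f t \<noteq> \<infinity>" and ng: "rearr g t \<noteq> \<infinity>" by auto
    obtain c1 where c1: "rearr f t = ennreal c1" "c1 \<ge> 0" using nf by (cases "rearr f t") auto
    obtain c2 where c2: "rearr g t = ennreal c2" "c2 \<ge> 0" using ng by (cases "rearr g t") auto
    define If where "If = (\<integral>\<^sup>+ x. ennreal (max 0 (\<bar>f x\<bar> - c1)) \<partial>lebesgue)"
    define Ig where "Ig = (\<integral>\<^sup>+ x. ennreal (max 0 (\<bar>g x\<bar> - c2)) \<partial>lebesgue)"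
    have "Phi t (\<lambda>x. f x + g x) \<le> ennreal ((c1 + c2) * t) + (\<integral>\<^sup>+ x. ennreal (max 0 (\<bar>f x + g x\<bar> - (c1 + c2))) \<partial>lebesgue)"
      by (rule Phi_upper) (use c1 c2 t in auto)
    also have "(\<integral>\<^sup>+ x. ennreal (max 0 (\<bar>f x + g x\<bar> - (c1 + c2))) \<partial>lebesgue)
        \<le> (\<integral>\<^sup>+ x. ennreal (max 0 (\<bar>f x\<bar> - c1)) + ennreal (max 0 (\<bar>g x\<bar> - c2)) \<partial>lebesgue)"
    proof (intro nn_integral_mono)
      fix x
      have "max 0 (\<bar>f x + g x\<bar> - (c1 + c2)) \<le> max 0 (\<bar>f x\<bar> - c1) + max 0 (\<bar>g x\<bar> - c2)"
        by (simp add: max_def) (smt (verit) abs_triangle_ineq)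
      then have "ennreal (max 0 (\<bar>f x + g x\<bar> - (c1 + c2))) \<le> ennreal (max 0 (\<bar>f x\<bar> - c1) + max 0 (\<bar>g x\<bar> - c2))"
        by (rule ennreal_leI)
      also have "\<dots> = ennreal (max 0 (\<bar>f x\<bar> - c1)) + ennreal (max 0 (\<bar>g x\<bar> - c2))"
        by (rule ennreal_plus) auto
      finally show "ennreal (max 0 (\<bar>f x + g x\<bar> - (c1 + c2))) \<le> ennreal (max 0 (\<bar>f x\<bar> - c1)) + ennreal (max 0 (\<bar>g x\<bar> - c2))" .
    qed
    also have "\<dots> = If + Ig" unfolding If_def Ig_def
      by (rule nn_integral_add) auto
    finally have 1: "Phi t (\<lambda>x. f x + g x) \<le> ennreal ((c1 + c2) * t) + (If + Ig)"
      by (metis add_left_mono)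
    have 2: "ennreal ((c1 + c2) * t) = ennreal (c1 * t) + ennreal (c2 * t)"
      unfolding distrib_right by (rule ennreal_plus) (use c1 c2 t in auto)
    have 3: "ennreal (c1 * t) + If \<le> Phi t f" unfolding If_def by (rule Phi_exact(2)[OF f t c1])
    have 4: "ennreal (c2 * t) + Ig \<le> Phi t g" unfolding Ig_def by (rule Phi_exact(2)[OF g t c2])
    have "ennreal ((c1 + c2) * t) + (If + Ig) = (ennreal (c1 * t) + If) + (ennreal (c2 * t) + Ig)"
      unfolding 2 by (simp only: add.assoc add.left_commute)
    also have "\<dots> \<le> Phi t f + Phi t g" by (rule add_mono[OF 3 4])
    finally show ?thesis using 1 by (rule order.trans[rotated])
  qed
qed

lemma Phi_scale:
  fixes f :: "'a::euclidean_space \<Rightarrow> real"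
  assumes f[measurable]: "f \<in> borel_measurable lebesgue"
  shows "Phi t (\<lambda>x. a * f x) = ennreal \<bar>a\<bar> * Phi t f"
proof (cases "a = 0")
  case True
  then show ?thesis unfolding Phi_def distrib_fun_def by simp
next
  case False
  have afm: "(\<lambda>x. a * f x) \<in> borel_measurable lebesgue" by measurable
  have dm[measurable]: "(\<lambda>l. distrib_fun (\<lambda>x. a * f x) (ennreal l)) \<in> borel_measurable borel"
    using distrib_measurable[OF afm] .
  have key: "distrib_fun (\<lambda>x. a * f x) (ennreal (\<bar>a\<bar> * l)) = distrib_fun f (ennreal l)" if "l \<ge> 0" for l
  proof -
    have "{x. ennreal (\<bar>a\<bar> * l) < ennreal \<bar>a * f x\<bar>} = {x. ennreal l < ennreal \<bar>f x\<bar>}"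
      using that False by (auto simp: ennreal_less_iff abs_mult)
    then show ?thesis unfolding distrib_fun_def by simp
  qed
  have meas: "(\<lambda>l. min (distrib_fun (\<lambda>x. a * f x) (ennreal l)) (ennreal t) * indicator {0..} l) \<in> borel_measurable borel"
    by measurable
  have "Phi t (\<lambda>x. a * f x) = ennreal \<bar>a\<bar> *
      (\<integral>\<^sup>+ l. min (distrib_fun (\<lambda>x. a * f x) (ennreal (0 + \<bar>a\<bar> * l))) (ennreal t) * indicator {0..} (0 + \<bar>a\<bar> * l) \<partial>lborel)"
    unfolding Phi_def
    using nn_integral_real_affine[OF meas, of "\<bar>a\<bar>" 0] False by simp
  also have "(\<integral>\<^sup>+ l. min (distrib_fun (\<lambda>x. a * f x) (ennreal (0 + \<bar>a\<bar> * l))) (ennreal t) * indicator {0..} (0 + \<bar>a\<bar> * l) \<partial>lborel)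
      = Phi t f"
    unfolding Phi_def
  proof (intro nn_integral_cong)
    fix l :: real
    show "min (distrib_fun (\<lambda>x. a * f x) (ennreal (0 + \<bar>a\<bar> * l))) (ennreal t) * indicator {0..} (0 + \<bar>a\<bar> * l) =
        min (distrib_fun f (ennreal l)) (ennreal t) * indicator {0..} l"
    proof (cases "l \<ge> 0")
      case True
      then show ?thesis using key[OF True] False by (simp add: indicator_def)
    next
      case F2: False
      then have "\<not> 0 \<le> \<bar>a\<bar> * l" using False by (simp add: zero_le_mult_iff)
      then show ?thesis using F2 by (simp add: indicator_def)
    qed
  qed
  finally show ?thesis .
qed


definition Vf :: "(real \<Rightarrow> real) \<Rightarrow> real \<Rightarrow> real" where
  "Vf W u = (INF s\<in>{0<..}. W s * (1 + u / s))"

definition Vh :: "(real \<Rightarrow> real) \<Rightarrow> real \<Rightarrow> nat \<Rightarrow> real" where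
  "Vh W h j = (if j = 0 then 0 else Vf W (j * h))"

definition sig :: "(real \<Rightarrow> real) \<Rightarrow> real \<Rightarrow> nat \<Rightarrow> real" where
  "sig W h i = (Vh W h i - Vh W h (i - 1)) / h"

definition Pm :: "(real \<Rightarrow> real) \<Rightarrow> real \<Rightarrow> nat \<Rightarrow> real \<Rightarrow> real" where
  "Pm W h m r = (\<Sum>i\<in>{1..m}. sig W h i * (min r (i * h) - min r ((i - 1) * h)))"

definition cf :: "(real \<Rightarrow> real) \<Rightarrow> real \<Rightarrow> nat \<Rightarrow> nat \<Rightarrow> real" where
  "cf W h m i = sig W h i - (if i < m then sig W h (i + 1) else 0)"


lemma aux_half: "a + (b - a) / 2 \<le> x \<Longrightarrow> b - x \<le> x - (a::real)" by (simp add: field_simps)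
lemma aux_half2: "a * (1/2) \<le> b \<Longrightarrow> a \<le> 2 * (b::real)" by (simp add: field_simps)

lemma abel_sum:
  fixes s a :: "nat \<Rightarrow> real"
  assumes a0: "a 0 = 0"
  shows "(\<Sum>i\<in>{1..m}. s i * (a i - a (i - 1))) = (\<Sum>i\<in>{1..m}. (s i - (if i < m then s (i + 1) else 0)) * a i)"
proof (induction m)
  case 0 then show ?case by simp
next
  case (Suc m)
  have split: "(\<Sum>i\<in>{1..m}. (s i - (if i < m then s (i + 1) else 0)) * a i)
      = (\<Sum>i\<in>{1..m}. (s i - s (i + 1)) * a i) + s (m + 1) * a m"
  proof (cases "m = 0")
    case True then show ?thesis using a0 by simp
  next
    case False
    have "(\<Sum>i\<in>{1..m}. (s i - (if i < m then s (i + 1) else 0)) * a i)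
        = (\<Sum>i\<in>{1..m}. (s i - s (i + 1)) * a i + (if i = m then s (i + 1) * a i else 0))"
      by (intro sum.cong) (auto simp: algebra_simps)
    also have "\<dots> = (\<Sum>i\<in>{1..m}. (s i - s (i + 1)) * a i) + s (m + 1) * a m"
      using False by (simp add: sum.distrib)
    finally show ?thesis .
  qed
  have "(\<Sum>i\<in>{1..Suc m}. (s i - (if i < Suc m then s (i + 1) else 0)) * a i)
      = (\<Sum>i\<in>{1..m}. (s i - (if i < Suc m then s (i + 1) else 0)) * a i) + s (Suc m) * a (Suc m)"
    by (simp add: sum.cl_ivl_Suc)
  also have "(\<Sum>i\<in>{1..m}. (s i - (if i < Suc m then s (i + 1) else 0)) * a i) = (\<Sum>i\<in>{1..m}. (s i - s (i + 1)) * a i)"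
    by (intro sum.cong) auto
  ultimately have "(\<Sum>i\<in>{1..Suc m}. (s i - (if i < Suc m then s (i + 1) else 0)) * a i)
      = (\<Sum>i\<in>{1..m}. (s i - s (i + 1)) * a i) + s (Suc m) * a (Suc m)" by simp
  moreover have "(\<Sum>i\<in>{1..Suc m}. s i * (a i - a (i - 1))) = (\<Sum>i\<in>{1..m}. s i * (a i - a (i - 1))) + s (Suc m) * (a (Suc m) - a m)"
    by (simp add: sum.cl_ivl_Suc)
  ultimately show ?case using Suc.IH split by (simp add: algebra_simps)
qed

locale qcW =
  fixes W :: "real \<Rightarrow> real" and C :: real
  assumes W_nonneg: "\<And>s. W s \<ge> 0"
    and W_mono: "\<And>s s'. 0 \<le> s \<Longrightarrow> s \<le> s' \<Longrightarrow> W s \<le> W s'"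
    and W_R1: "\<And>r s. 0 < r \<Longrightarrow> r < s \<Longrightarrow> W s / s \<le> C * (W r / r)"
    and C_ge: "C \<ge> 1"
begin

lemma V_bdd: "bdd_below ((\<lambda>s. W s * (1 + u / s)) ` {0<..})" if "u \<ge> 0"
  using that W_nonneg by (intro bdd_belowI[of _ 0]) auto

lemma V_le: "u \<ge> 0 \<Longrightarrow> s > 0 \<Longrightarrow> Vf W u \<le> W s * (1 + u / s)"
  unfolding Vf_def by (rule cINF_lower[OF V_bdd]) auto

lemma V_ge: "(\<And>s. s > 0 \<Longrightarrow> y \<le> W s * (1 + u / s)) \<Longrightarrow> y \<le> Vf W u"
  unfolding Vf_def by (rule cINF_greatest) auto

lemma V_nonneg: "u \<ge> 0 \<Longrightarrow> Vf W u \<ge> 0"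
  by (rule V_ge) (use W_nonneg in auto)

lemma V_mono: "0 \<le> u \<Longrightarrow> u \<le> u' \<Longrightarrow> Vf W u \<le> Vf W u'"
proof (rule V_ge)
  fix s :: real assume "u \<le> u'" "0 \<le> u" "s > 0"
  then have "Vf W u \<le> W s * (1 + u / s)" using V_le by auto
  also have "\<dots> \<le> W s * (1 + u' / s)" using \<open>u \<le> u'\<close> \<open>s > 0\<close> W_nonneg
    by (intro mult_left_mono) (auto simp: divide_right_mono)
  finally show "Vf W u \<le> W s * (1 + u' / s)" .
qed

lemma V_conc:
  assumes "0 \<le> a" "a \<le> x" "x \<le> b" "a < b"
  shows "Vf W a + (Vf W b - Vf W a) * (x - a) / (b - a) \<le> Vf W x"
proof (rule V_ge)
  fix s :: real assume s: "s > 0"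
  define th where "th = (x - a) / (b - a)"
  have th: "0 \<le> th" "th \<le> 1" using assms unfolding th_def by auto
  have e: "(Vf W b - Vf W a) * (x - a) / (b - a) = th * (Vf W b - Vf W a)"
    by (simp add: th_def ac_simps)
  have "Vf W a + (Vf W b - Vf W a) * (x - a) / (b - a) = (1 - th) * Vf W a + th * Vf W b"
    unfolding e by (simp add: algebra_simps)
  also have "\<dots> \<le> (1 - th) * (W s * (1 + a / s)) + th * (W s * (1 + b / s))"
    using th s assms by (intro add_mono mult_left_mono V_le) auto
  also have "\<dots> = W s * (1 + ((1 - th) * a + th * b) / s)"
    using s by (simp add: field_simps)
  also have "(1 - th) * a + th * b = x"
  proof -
    have "th * (b - a) = x - a" using assms unfolding th_def by simp
    then have h: "th * b - th * a = x - a" by (simp add: right_diff_distrib)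
    show ?thesis using h by (simp add: left_diff_distrib)
  qed
  finally show "Vf W a + (Vf W b - Vf W a) * (x - a) / (b - a) \<le> W s * (1 + x / s)" .
qed

lemma V_conc0:
  assumes "0 \<le> x" "x \<le> b" "0 < b"
  shows "Vf W b * x / b \<le> Vf W x"
proof -
  have "Vf W b * x / b \<le> Vf W 0 + (Vf W b - Vf W 0) * (x - 0) / (b - 0)"
  proof -
    have "Vf W b * x / b = Vf W 0 + (Vf W b - Vf W 0) * (x - 0) / (b - 0) - Vf W 0 * (1 - x / b)"
      using assms by (simp add: field_simps)
    moreover have "Vf W 0 * (1 - x / b) \<ge> 0" using V_nonneg[of 0] assms by simp
    ultimately show ?thesis by linarith
  qed
  also have "\<dots> \<le> Vf W x" using V_conc[of 0 x b] assms by simp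
  finally show ?thesis .
qed

lemma V_le_2W: "u > 0 \<Longrightarrow> Vf W u \<le> 2 * W u"
  using V_le[of u u] by simp

lemma W_le_CV: assumes "u > 0" shows "W u \<le> C * Vf W u"
proof -
  have "W u / C \<le> Vf W u"
  proof (rule V_ge)
    fix s :: real assume s: "s > 0"
    show "W u / C \<le> W s * (1 + u / s)"
    proof (cases "u \<le> s")
      case True
      have "W u * 1 \<le> W u * C" by (rule mult_left_mono) (use C_ge W_nonneg in auto)
      then have "W u / C \<le> W u" using C_ge by (simp add: divide_le_eq)
      also have "\<dots> \<le> W s" using W_mono[of u s] True assms by simp
      also have "\<dots> = W s * 1" by simp
      also have "\<dots> \<le> W s * (1 + u / s)" by (rule mult_left_mono) (use assms s W_nonneg in auto)
      finally show ?thesis .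
    next
      case False
      then have "W u / u \<le> C * (W s / s)" using W_R1[of s u] s by simp
      then have "W u / C \<le> u * (W s / s)" using assms C_ge by (simp add: field_simps)
      also have "\<dots> \<le> W s * (1 + u / s)" using W_nonneg[of s] s by (simp add: field_simps)
      finally show ?thesis .
    qed
  qed
  then show ?thesis using C_ge by (simp add: field_simps)
qed


lemma Vh_nonneg: "h > 0 \<Longrightarrow> Vh W h j \<ge> 0"
  unfolding Vh_def using V_nonneg by auto

lemma Vh_Suc: "Vh W h (Suc j) = Vf W (real (Suc j) * h)"
  unfolding Vh_def by simp

lemma sig_nonneg: assumes h: "h > 0" and i: "i \<ge> 1" shows "sig W h i \<ge> 0"
proof -
  have "Vh W h (i - 1) \<le> Vh W h i"
  proof (cases "i - 1 = 0")
    case True then show ?thesis using i h V_nonneg by (simp add: Vh_def)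
  next
    case False
    then show ?thesis using i h unfolding Vh_def by (auto intro!: V_mono)
  qed
  then show ?thesis unfolding sig_def using h by simp
qed

lemma sig_dec: assumes h: "h > 0" and i: "i \<ge> 1" shows "sig W h (i + 1) \<le> sig W h i"
proof (cases "i = 1")
  case True
  have "Vf W (2 * h) * h / (2 * h) \<le> Vf W h" using V_conc0[of h "2 * h"] h by simp
  then have "Vf W (2 * h) \<le> 2 * Vf W h" using h by (simp add: field_simps)
  then show ?thesis using True h unfolding sig_def Vh_def by (simp add: divide_right_mono)
next
  case False
  then have i2: "i \<ge> 2" using i by simp
  let ?a = "real (i - 1) * h" and ?x = "real i * h" and ?b = "real (i + 1) * h"
  have ra: "real (i - 1) = real i - 1" using i by (simp add: of_nat_diff)
  have d1: "?x - ?a = h" and d2: "?b - ?a = 2 * h" using ra by (simp_all add: algebra_simps)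
  have c: "Vf W ?a + (Vf W ?b - Vf W ?a) * (?x - ?a) / (?b - ?a) \<le> Vf W ?x"
    by (rule V_conc) (use h i2 ra d1 d2 in auto)
  have e: "(Vf W ?b - Vf W ?a) * (?x - ?a) / (?b - ?a) = (Vf W ?b - Vf W ?a) / 2"
    unfolding d1 d2 using h by simp
  have "Vf W ?a + (Vf W ?b - Vf W ?a) / 2 \<le> Vf W ?x" using c unfolding e .
  then have "Vf W ?b - Vf W ?x \<le> Vf W ?x - Vf W ?a" by (rule aux_half)
  then have "(Vf W ?b - Vf W ?x) / h \<le> (Vf W ?x - Vf W ?a) / h" using h by (simp add: divide_right_mono)
  moreover have "sig W h (i + 1) = (Vf W ?b - Vf W ?x) / h" using i2 by (simp add: sig_def Vh_def)
  moreover have "sig W h i = (Vf W ?x - Vf W ?a) / h" using i2 by (simp add: sig_def Vh_def)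
  ultimately show ?thesis by simp
qed

lemma cf_nonneg: assumes h: "h > 0" and i: "i \<ge> 1" shows "cf W h m i \<ge> 0"
  unfolding cf_def using sig_dec[OF h i] sig_nonneg[OF h i] by auto

lemma Pm_cf: assumes "r \<ge> 0" shows "Pm W h m r = (\<Sum>i\<in>{1..m}. cf W h m i * min r (i * h))"
  unfolding Pm_def cf_def
  using abel_sum[of "\<lambda>i. min r (real i * h)" "sig W h" m] assms by (simp add: of_nat_diff)

lemma Pm_Suc: "Pm W h (Suc m) r = Pm W h m r + sig W h (Suc m) * (min r (real (Suc m) * h) - min r (real m * h))"
  unfolding Pm_def by (simp add: sum.cl_ivl_Suc)

lemma Pm_props:
  assumes h: "h > 0"
  shows "(\<forall>r\<ge>0. Pm W h m r \<le> Vf W r) \<and> (\<forall>r\<ge>real m * h. Pm W h m r = Vh W h m)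
    \<and> (\<forall>r. h \<le> r \<and> r \<le> real m * h \<longrightarrow> Vf W r \<le> 2 * Pm W h m r)"
proof (induction m)
  case 0
  then show ?case using V_nonneg h by (auto simp: Pm_def Vh_def)
next
  case (Suc m)
  have IA: "\<And>r. r \<ge> 0 \<Longrightarrow> Pm W h m r \<le> Vf W r" and IB: "\<And>r. r \<ge> real m * h \<Longrightarrow> Pm W h m r = Vh W h m"
    and ID: "\<And>r. h \<le> r \<Longrightarrow> r \<le> real m * h \<Longrightarrow> Vf W r \<le> 2 * Pm W h m r" using Suc.IH by auto
  have sig_eq: "sig W h (Suc m) * h = Vf W (real (Suc m) * h) - Vh W h m"
    unfolding sig_def Vh_Suc using h by simp
  have A: "Pm W h (Suc m) r \<le> Vf W r \<and> (real (Suc m) * h \<le> r \<longrightarrow> Pm W h (Suc m) r = Vh W h (Suc m))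
     \<and> (h \<le> r \<and> r \<le> real (Suc m) * h \<longrightarrow> Vf W r \<le> 2 * Pm W h (Suc m) r)" if r: "r \<ge> 0" for r
  proof (cases "r \<le> real m * h")
    case True
    moreover have "r \<le> real (Suc m) * h" using True h by (simp add: algebra_simps)
    ultimately have "Pm W h (Suc m) r = Pm W h m r" by (simp add: Pm_Suc min_def)
    moreover have "\<not> real (Suc m) * h \<le> r" using True h by (simp add: algebra_simps)
    ultimately show ?thesis using IA[OF r] ID True by auto
  next
    case False
    then have rm: "r > real m * h" by simp
    have P: "Pm W h (Suc m) r = Vh W h m + sig W h (Suc m) * (min r (real (Suc m) * h) - real m * h)"
      using rm by (simp add: Pm_Suc IB)
    show ?thesis
    proof (cases "r \<le> real (Suc m) * h")
      case True
      have P2: "Pm W h (Suc m) r = Vh W h m + (Vf W (real (Suc m) * h) - Vh W h m) * (r - real m * h) / h"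
        using P True sig_eq h by (simp add: sig_def Vh_Suc)
      have up: "Pm W h (Suc m) r \<le> Vf W r"
      proof (cases "m = 0")
        case True
        then have "Pm W h (Suc m) r = Vf W h * r / h" using P2 by (simp add: Vh_def)
        also have "\<dots> \<le> Vf W r" using V_conc0[of r h] r \<open>r \<le> real (Suc m) * h\<close> True h by simp
        finally show ?thesis .
      next
        case False
        have "Vf W (real m * h) + (Vf W (real (Suc m) * h) - Vf W (real m * h)) * (r - real m * h) / (real (Suc m) * h - real m * h) \<le> Vf W r"
          by (rule V_conc) (use h rm \<open>r \<le> real (Suc m) * h\<close> in auto)
        then show ?thesis using P2 False h by (simp add: Vh_def algebra_simps)
      qed
      have low: "Vf W r \<le> 2 * Pm W h (Suc m) r" if hr: "h \<le> r"
      proof -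
        have "sig W h (Suc m) \<ge> 0" using sig_nonneg[OF h] by simp
        then have ge: "Pm W h (Suc m) r \<ge> Vh W h m" using P rm True by (simp add: min_def)
        show ?thesis
        proof (cases "m = 0")
          case True
          then have "r = h" using hr \<open>r \<le> real (Suc m) * h\<close> by simp
          then have "Pm W h (Suc m) r = Vf W h" using P2 True h by (simp add: Vh_def)
          then show ?thesis using \<open>r = h\<close> V_nonneg[of h] h by simp
        next
          case False
          let ?A = "Vf W (real (Suc m) * h)"
          have a0: "?A * (real m * h) / (real (Suc m) * h) \<le> Vf W (real m * h)"
            by (rule V_conc0) (use h in auto)
          have q: "real m * h / (real (Suc m) * h) = real m / real (Suc m)" using h by simp
          have a1: "?A * (real m / real (Suc m)) \<le> Vf W (real m * h)"
            using a0 by (subst (asm) times_divide_eq_right[symmetric]) (simp only: q)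
          have a2: "real m / real (Suc m) \<ge> 1 / 2" using False by (simp add: field_simps)
          have a3: "?A \<ge> 0" using V_nonneg h by simp
          have "?A * (1/2) \<le> ?A * (real m / real (Suc m))" using a2 a3 by (rule mult_left_mono)
          then have "?A * (1/2) \<le> Vf W (real m * h)" using a1 by (rule order_trans)
          then have a4: "?A \<le> 2 * Vf W (real m * h)" by (rule aux_half2)
          have a5: "Vf W r \<le> ?A" using V_mono r True by simp
          have "Vf W r \<le> 2 * Vh W h m" using a4 a5 False by (simp add: Vh_def)
          then show ?thesis using ge by simp
        qed
      qed
      have B: "real (Suc m) * h \<le> r \<longrightarrow> Pm W h (Suc m) r = Vh W h (Suc m)"
      proof
        assume "real (Suc m) * h \<le> r"
        then have "r = real (Suc m) * h" using True by simp
        then show "Pm W h (Suc m) r = Vh W h (Suc m)" using P sig_eq by (simp add: Vh_Suc algebra_simps)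
      qed
      show ?thesis using up low B by auto
    next
      case False
      have "Pm W h (Suc m) r = Vh W h m + sig W h (Suc m) * h"
        using P False by (simp add: min_def algebra_simps)
      then have e: "Pm W h (Suc m) r = Vh W h (Suc m)" using sig_eq by (simp add: Vh_Suc)
      moreover have "Vh W h (Suc m) \<le> Vf W r" unfolding Vh_Suc using False h by (intro V_mono) auto
      ultimately show ?thesis using False by auto
    qed
  qed
  have hz: "real (Suc m) * h \<ge> 0" using h by simp
  have c1: "\<forall>r\<ge>0. Pm W h (Suc m) r \<le> Vf W r" using A by blast
  have c2: "\<forall>r\<ge>real (Suc m) * h. Pm W h (Suc m) r = Vh W h (Suc m)"
  proof (intro allI impI)
    fix r assume "r \<ge> real (Suc m) * h"
    then show "Pm W h (Suc m) r = Vh W h (Suc m)" using A[of r] hz by simp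
  qed
  have c3: "\<forall>r. h \<le> r \<and> r \<le> real (Suc m) * h \<longrightarrow> Vf W r \<le> 2 * Pm W h (Suc m) r"
  proof (intro allI impI)
    fix r assume "h \<le> r \<and> r \<le> real (Suc m) * h"
    then show "Vf W r \<le> 2 * Pm W h (Suc m) r" using A[of r] h by simp
  qed
  show ?case using c1 c2 c3 by blast
qed

end


definition Wr :: "(real \<Rightarrow> real) \<Rightarrow> real \<Rightarrow> real" where
  "Wr w s = (\<integral>x\<in>{0<..s}. w x \<partial>lborel)"

lemma weight_meas: "is_weight w \<Longrightarrow> w \<in> borel_measurable borel"
  unfolding is_weight_def by simp

lemma Wr_ennreal:
  assumes w: "is_weight w" and s: "s > 0"
  shows "ennreal (Wr w s) = (\<integral>\<^sup>+ x\<in>{0<..s}. ennreal (w x) \<partial>lborel)"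
proof -
  have int: "integrable lborel (\<lambda>x. indicator {0<..s} x *\<^sub>R w x)"
    using w s unfolding is_weight_def set_integrable_def by auto
  have "(\<integral>\<^sup>+ x. ennreal (indicator {0<..s} x *\<^sub>R w x) \<partial>lborel) = ennreal (Wr w s)"
    unfolding Wr_def set_lebesgue_integral_def
    by (rule nn_integral_eq_integral[OF int]) (use w in \<open>auto simp: is_weight_def indicator_def\<close>)
  moreover have "(\<integral>\<^sup>+ x. ennreal (indicator {0<..s} x *\<^sub>R w x) \<partial>lborel) = (\<integral>\<^sup>+ x\<in>{0<..s}. ennreal (w x) \<partial>lborel)"
    by (intro nn_integral_cong) (auto simp: indicator_def)
  ultimately show ?thesis by simp
qed

lemma Wr_nonneg: assumes w: "is_weight w" shows "Wr w s \<ge> 0"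
  unfolding Wr_def set_lebesgue_integral_def
  by (rule Bochner_Integration.integral_nonneg) (use w in \<open>auto simp: is_weight_def indicator_def\<close>)

lemma Wr_zero: "s \<le> 0 \<Longrightarrow> Wr w s = 0"
  unfolding Wr_def set_lebesgue_integral_def by simp

lemma Wb_Wr:
  assumes w: "is_weight w" and s: "s > 0"
  shows "Wb w (ennreal s) = ennreal (Wr w s)"
proof -
  have "Wb w (ennreal s) = (\<integral>\<^sup>+ t. ennreal (w t) * indicator {0<..<s} t \<partial>lborel)"
    unfolding Wb_def using s by (intro nn_integral_cong) (auto simp: indicator_def ennreal_less_iff)
  also have "\<dots> = (\<integral>\<^sup>+ t\<in>{0<..s}. ennreal (w t) \<partial>lborel)"
    by (intro nn_integral_cong_AE) (use AE_lborel_singleton[of s] in \<open>auto simp: indicator_def elim!: eventually_mono\<close>)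
  also have "\<dots> = ennreal (Wr w s)" using Wr_ennreal[OF w s] by simp
  finally show ?thesis .
qed

lemma Wb_zero: "Wb w 0 = 0"
  unfolding Wb_def by simp

lemma Wr_mono: assumes w: "is_weight w" and "0 \<le> s" "s \<le> s'" shows "Wr w s \<le> Wr w s'"
proof (cases "s = 0")
  case True then show ?thesis using Wr_nonneg[OF w] by (simp add: Wr_zero)
next
  case False
  then have s: "s > 0" using assms by simp
  have "ennreal (Wr w s) = Wb w (ennreal s)" using Wb_Wr[OF w s] by simp
  also have "\<dots> \<le> Wb w (ennreal s')" using assms by (intro Wb_mono ennreal_leI) simp
  also have "\<dots> = ennreal (Wr w s')" using Wb_Wr[OF w, of s'] s assms by simp
  finally show ?thesis using Wr_nonneg[OF w, of s'] by simp
qed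

lemma Wb_top:
  assumes w: "is_weight w"
  shows "Wb w \<infinity> = (SUP n. Wb w (ennreal (real n)))"
proof -
  have wm[measurable]: "w \<in> borel_measurable borel" using weight_meas[OF w] .
  define g where "g n t = indicator {0<..<real n} t * ennreal (w t)" for n :: nat and t :: real
  have Wn: "Wb w (ennreal (real n)) = integral\<^sup>N lborel (g n)" for n
    unfolding Wb_ennreal[of "real n" w, simplified] g_def by (intro nn_integral_cong) (simp add: mult.commute)
  have "(SUP n. integral\<^sup>N lborel (g n)) = (\<integral>\<^sup>+ t. (SUP n. g n t) \<partial>lborel)"
  proof (rule nn_integral_monotone_convergence_SUP[symmetric])
    show "incseq g"
      by (intro incseq_SucI le_funI) (auto simp: g_def indicator_def)
  qed (unfold g_def, measurable)
  also have "\<dots> = Wb w \<infinity>"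
    unfolding Wb_def
  proof (intro nn_integral_cong)
    fix t :: real
    show "(SUP n. g n t) = indicator {t. ennreal t < \<infinity>} t * ennreal (w t) * indicator {0<..} t"
    proof (cases "t > 0")
      case True
      obtain n :: nat where n: "t < n" using reals_Archimedean2 by blast
      have "(SUP n. g n t) = ennreal (w t)"
      proof (rule antisym)
        show "(SUP n. g n t) \<le> ennreal (w t)"
          by (rule SUP_least) (auto simp: g_def indicator_def)
        have "g n t = ennreal (w t)" using n True by (simp add: g_def indicator_def)
        then show "ennreal (w t) \<le> (SUP n. g n t)" by (metis SUP_upper UNIV_I)
      qed
      then show ?thesis using True by (simp add: indicator_def)
    qed (simp add: g_def)
  qed
  finally show ?thesis using Wn by simp
qed


lemma qcW_of_R1:
  assumes w: "is_weight w" and R: "R1 w"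
  shows "\<exists>C. qcW (Wr w) C"
proof -
  obtain C where C: "\<And>r s. 0 < r \<Longrightarrow> r < s \<Longrightarrow> (1 / s) * Wr w s \<le> (C / r) * Wr w r"
    using R unfolding R1_def Wr_def by blast
  define C' where "C' = max C 1"
  have "qcW (Wr w) C'"
  proof
    show "\<And>s. 0 \<le> Wr w s" using Wr_nonneg[OF w] .
    show "\<And>s s'. 0 \<le> s \<Longrightarrow> s \<le> s' \<Longrightarrow> Wr w s \<le> Wr w s'" using Wr_mono[OF w] .
    show "1 \<le> C'" unfolding C'_def by simp
    fix r s :: real assume rs: "0 < r" "r < s"
    have "Wr w s / s = (1 / s) * Wr w s" by simp
    also have "\<dots> \<le> (C / r) * Wr w r" using C[OF rs] .
    also have "\<dots> = C * (Wr w r / r)" by simp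
    also have "\<dots> \<le> C' * (Wr w r / r)" unfolding C'_def
      using Wr_nonneg[OF w, of r] rs by (intro mult_right_mono) auto
    finally show "Wr w s / s \<le> C' * (Wr w r / r)" .
  qed
  then show ?thesis by blast
qed

definition hh :: "nat \<Rightarrow> real" where "hh n = 1 / real (Suc n)"
definition mm :: "nat \<Rightarrow> nat" where "mm n = (Suc n)^2"

lemma hh_pos: "hh n > 0" unfolding hh_def by simp
lemma mm_hh: "real (mm n) * hh n = real (Suc n)"
proof -
  have "real (mm n) = real (Suc n) * real (Suc n)" unfolding mm_def by (simp only: power2_eq_square of_nat_mult)
  then show ?thesis unfolding hh_def by simp
qed

definition Pb :: "(real \<Rightarrow> real) \<Rightarrow> nat \<Rightarrow> ennreal \<Rightarrow> ennreal" where
  "Pb w n u = (\<Sum>i\<in>{1..mm n}. ennreal (cf (Wr w) (hh n) (mm n) i) * min u (ennreal (real i * hh n)))"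

definition Psi :: "(real \<Rightarrow> real) \<Rightarrow> nat \<Rightarrow> ('a::euclidean_space \<Rightarrow> real) \<Rightarrow> ennreal" where
  "Psi w n f = (\<Sum>i\<in>{1..mm n}. ennreal (cf (Wr w) (hh n) (mm n) i) * Phi (real i * hh n) f)"

lemma Psi_int:
  fixes f :: "'a::euclidean_space \<Rightarrow> real"
  assumes f[measurable]: "f \<in> borel_measurable lebesgue"
  shows "Psi w n f = (\<integral>\<^sup>+ l\<in>{0..}. Pb w n (distrib_fun f (ennreal l)) \<partial>lborel)"
proof -
  have dm[measurable]: "(\<lambda>l. distrib_fun f (ennreal l)) \<in> borel_measurable borel"
    using distrib_measurable[OF f] .
  have "(\<integral>\<^sup>+ l\<in>{0..}. Pb w n (distrib_fun f (ennreal l)) \<partial>lborel)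
     = (\<integral>\<^sup>+ l. (\<Sum>i\<in>{1..mm n}. ennreal (cf (Wr w) (hh n) (mm n) i) * (min (distrib_fun f (ennreal l)) (ennreal (real i * hh n)) * indicator {0..} l)) \<partial>lborel)"
    unfolding Pb_def sum_distrib_right by (intro nn_integral_cong sum.cong refl) (simp only: mult.assoc)
  also have "\<dots> = (\<Sum>i\<in>{1..mm n}. (\<integral>\<^sup>+ l. ennreal (cf (Wr w) (hh n) (mm n) i) * (min (distrib_fun f (ennreal l)) (ennreal (real i * hh n)) * indicator {0..} l) \<partial>lborel))"
    by (rule nn_integral_sum) measurable
  also have "\<dots> = Psi w n f"
    unfolding Psi_def Phi_def by (intro sum.cong refl nn_integral_cmult) measurable
  finally show ?thesis by simp
qed

context
  fixes w :: "real \<Rightarrow> real" and C :: real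
  assumes w: "is_weight w" and qc: "qcW (Wr w) C"
begin

interpretation q: qcW "Wr w" C by (rule qc)

lemma Pb_real: assumes r: "r \<ge> 0" shows "Pb w n (ennreal r) = ennreal (Pm (Wr w) (hh n) (mm n) r)"
proof -
  have "Pb w n (ennreal r) = (\<Sum>i\<in>{1..mm n}. ennreal (cf (Wr w) (hh n) (mm n) i * min r (real i * hh n)))"
    unfolding Pb_def
  proof (intro sum.cong refl)
    fix i assume i: "i \<in> {1..mm n}"
    have "min (ennreal r) (ennreal (real i * hh n)) = ennreal (min r (real i * hh n))"
      using r hh_pos[of n] by (simp add: min_def ennreal_le_iff)
    moreover have "0 \<le> min r (real i * hh n)" using r hh_pos[of n] by simp
    moreover have "0 \<le> cf (Wr w) (hh n) (mm n) i" using q.cf_nonneg[OF hh_pos, of i] i by simp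
    ultimately show "ennreal (cf (Wr w) (hh n) (mm n) i) * min (ennreal r) (ennreal (real i * hh n)) =
      ennreal (cf (Wr w) (hh n) (mm n) i * min r (real i * hh n))"
      by (simp only: ennreal_mult)
  qed
  also have "\<dots> = ennreal (\<Sum>i\<in>{1..mm n}. cf (Wr w) (hh n) (mm n) i * min r (real i * hh n))"
    by (rule sum_ennreal) (use q.cf_nonneg[OF hh_pos] r hh_pos[of n] in \<open>auto intro!: mult_nonneg_nonneg\<close>)
  also have "\<dots> = ennreal (Pm (Wr w) (hh n) (mm n) r)" using q.Pm_cf[OF r] by simp
  finally show ?thesis .
qed

lemma Pb_top: "Pb w n \<infinity> = ennreal (Pm (Wr w) (hh n) (mm n) (real (Suc n)))"
proof -
  have "Pb w n \<infinity> = Pb w n (ennreal (real (Suc n)))"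
    unfolding Pb_def
  proof (intro sum.cong refl)
    fix i assume i: "i \<in> {1..mm n}"
    have "real i * hh n \<le> real (mm n) * hh n" using i hh_pos[of n] by (intro mult_right_mono) auto
    then have "real i * hh n \<le> real (Suc n)" using mm_hh by simp
    then have e1: "min (ennreal (real (Suc n))) (ennreal (real i * hh n)) = ennreal (real i * hh n)"
      by (intro min_absorb2 ennreal_leI)
    have e2: "min \<infinity> (ennreal (real i * hh n)) = ennreal (real i * hh n)" by (rule min_absorb2) simp
    show "ennreal (cf (Wr w) (hh n) (mm n) i) * min \<infinity> (ennreal (real i * hh n)) =
      ennreal (cf (Wr w) (hh n) (mm n) i) * min (ennreal (real (Suc n))) (ennreal (real i * hh n))"
      by (simp only: e1 e2)
  qed
  moreover have "Pb w n (ennreal (real (Suc n))) = ennreal (Pm (Wr w) (hh n) (mm n) (real (Suc n)))"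
    by (rule Pb_real) simp
  ultimately show ?thesis by (simp only:)
qed

lemma Pb_upper: "Pb w n u \<le> 2 * Wb w u"
proof (cases u)
  case (real r)
  show ?thesis
  proof (cases "r = 0")
    case True
    have "Pb w n 0 = 0" unfolding Pb_def by simp
    then show ?thesis using real True by simp
  next
    case False
    then have r: "r > 0" using real by simp
    have "Pm (Wr w) (hh n) (mm n) r \<le> Vf (Wr w) r"
      using q.Pm_props[OF hh_pos, of n "mm n"] r by auto
    then have "Pm (Wr w) (hh n) (mm n) r \<le> 2 * Wr w r" using q.V_le_2W[OF r] by linarith
    then have "ennreal (Pm (Wr w) (hh n) (mm n) r) \<le> ennreal (2 * Wr w r)" by (rule ennreal_leI)
    also have "\<dots> = 2 * Wb w u" using real Wb_Wr[OF w r] Wr_nonneg[OF w, of r] by (simp add: ennreal_mult)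
    finally show ?thesis using real Pb_real[of r n] r by simp
  qed
next
  case top
  have pos: "real (Suc n) > 0" by simp
  have "Pm (Wr w) (hh n) (mm n) (real (Suc n)) \<le> Vf (Wr w) (real (Suc n))"
    using q.Pm_props[OF hh_pos, of n "mm n"] pos by (meson less_imp_le)
  then have "Pm (Wr w) (hh n) (mm n) (real (Suc n)) \<le> 2 * Wr w (real (Suc n))"
    using q.V_le_2W[OF pos] by linarith
  then have "ennreal (Pm (Wr w) (hh n) (mm n) (real (Suc n))) \<le> ennreal (2 * Wr w (real (Suc n)))" by (rule ennreal_leI)
  also have "\<dots> = 2 * Wb w (ennreal (real (Suc n)))"
    using Wb_Wr[OF w pos] Wr_nonneg[OF w, of "real (Suc n)"] by (simp add: ennreal_mult)
  also have "\<dots> \<le> 2 * Wb w \<infinity>" by (intro mult_left_mono Wb_mono) auto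
  finally show ?thesis using top Pb_top by simp
qed


lemma Pb_lower: "ennreal (1 / (2 * C)) * Wb w u \<le> liminf (\<lambda>n. Pb w n u)"
proof -
  have C1: "C \<ge> 1" using q.C_ge .
  have key: "ennreal (1 / (2 * C)) * ennreal (Wr w r) \<le> ennreal (Pm (Wr w) (hh n) (mm n) r)"
    if r: "r > 0" and V: "Vf (Wr w) r \<le> 2 * Pm (Wr w) (hh n) (mm n) r" for r n
  proof -
    have "Wr w r \<le> C * Vf (Wr w) r" using q.W_le_CV[OF r] .
    also have "\<dots> \<le> C * (2 * Pm (Wr w) (hh n) (mm n) r)" using V C1 by (intro mult_left_mono) auto
    finally have "1 / (2 * C) * Wr w r \<le> Pm (Wr w) (hh n) (mm n) r" using C1 by (simp add: field_simps)
    then have "ennreal (1 / (2 * C) * Wr w r) \<le> ennreal (Pm (Wr w) (hh n) (mm n) r)" by (rule ennreal_leI)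
    moreover have "ennreal (1 / (2 * C)) * ennreal (Wr w r) = ennreal (1 / (2 * C) * Wr w r)"
      by (rule ennreal_mult[symmetric]) (use C1 Wr_nonneg[OF w, of r] in auto)
    ultimately show ?thesis by simp
  qed
  show ?thesis
  proof (cases u)
    case (real r)
    show ?thesis
    proof (cases "r = 0")
      case True then show ?thesis using real by (simp add: Wb_zero)
    next
      case False
      then have r: "r > 0" using real by simp
      obtain N :: nat where N: "max r (1 / r) < N" using reals_Archimedean2 by blast
      have ev: "eventually (\<lambda>n. ennreal (1 / (2 * C)) * Wb w u \<le> Pb w n u) sequentially"
      proof (rule eventually_sequentiallyI[of N])
        fix n assume n: "N \<le> n"
        have "1 / r < real (Suc n)" using N n by simp
        then have h1: "hh n \<le> r" unfolding hh_def using r by (simp add: field_simps)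
        have h2: "r \<le> real (mm n) * hh n" unfolding mm_hh using N n by simp
        have "Vf (Wr w) r \<le> 2 * Pm (Wr w) (hh n) (mm n) r"
          using q.Pm_props[OF hh_pos, of n "mm n"] h1 h2 by blast
        then have "ennreal (1 / (2 * C)) * ennreal (Wr w r) \<le> ennreal (Pm (Wr w) (hh n) (mm n) r)"
          by (rule key[OF r])
        then show "ennreal (1 / (2 * C)) * Wb w u \<le> Pb w n u"
          using real Wb_Wr[OF w r] Pb_real[of r n] r by simp
      qed
      show ?thesis by (rule Liminf_bounded[OF ev])
    qed
  next
    case top
    have "ennreal (1 / (2 * C)) * Wb w \<infinity> = (SUP k. ennreal (1 / (2 * C)) * Wb w (ennreal (real k)))"
      unfolding Wb_top[OF w] by (rule SUP_mult_left_ennreal)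
    also have "\<dots> \<le> liminf (\<lambda>n. Pb w n \<infinity>)"
    proof (rule SUP_least)
      fix k :: nat
      have ev: "eventually (\<lambda>n. ennreal (1 / (2 * C)) * Wb w (ennreal (real k)) \<le> Pb w n \<infinity>) sequentially"
      proof (rule eventually_sequentiallyI[of k])
        fix n assume n: "k \<le> n"
        have pos: "real (Suc n) > 0" by simp
        have "ennreal (1 / (2 * C)) * Wb w (ennreal (real k)) \<le> ennreal (1 / (2 * C)) * Wb w (ennreal (real (Suc n)))"
          using n by (intro mult_left_mono Wb_mono ennreal_leI) auto
        also have "\<dots> = ennreal (1 / (2 * C)) * ennreal (Wr w (real (Suc n)))" using Wb_Wr[OF w pos] by simp
        also have "\<dots> \<le> ennreal (Pm (Wr w) (hh n) (mm n) (real (Suc n)))"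
        proof (rule key[OF pos])
          have "Pm (Wr w) (hh n) (mm n) (real (Suc n)) = Vh (Wr w) (hh n) (mm n)"
            using q.Pm_props[OF hh_pos, of n "mm n"] mm_hh[of n] by auto
          also have "\<dots> = Vf (Wr w) (real (Suc n))" unfolding Vh_def mm_hh by (simp add: mm_def)
          finally show "Vf (Wr w) (real (Suc n)) \<le> 2 * Pm (Wr w) (hh n) (mm n) (real (Suc n))"
            using q.V_nonneg[of "real (Suc n)"] by simp
        qed
        also have "\<dots> = Pb w n \<infinity>" using Pb_top by simp
        finally show "ennreal (1 / (2 * C)) * Wb w (ennreal (real k)) \<le> Pb w n \<infinity>" .
      qed
      show "ennreal (1 / (2 * C)) * Wb w (ennreal (real k)) \<le> liminf (\<lambda>n. Pb w n \<infinity>)"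
        by (rule Liminf_bounded[OF ev])
    qed
    finally show ?thesis using top by simp
  qed
qed


lemma Pb_meas:
  fixes f :: "'a::euclidean_space \<Rightarrow> real"
  assumes f[measurable]: "f \<in> borel_measurable lebesgue"
  shows "(\<lambda>l. Pb w n (distrib_fun f (ennreal l))) \<in> borel_measurable borel"
proof -
  have dm[measurable]: "(\<lambda>l. distrib_fun f (ennreal l)) \<in> borel_measurable borel"
    using distrib_measurable[OF f] .
  show ?thesis unfolding Pb_def by measurable
qed

lemma Psi_upper:
  fixes f :: "'a::euclidean_space \<Rightarrow> real"
  assumes f[measurable]: "f \<in> borel_measurable lebesgue"
  shows "Psi w n f \<le> 2 * Lambda_norm w f"
proof -
  have "Psi w n f \<le> (\<integral>\<^sup>+ l\<in>{0..}. 2 * Wb w (distrib_fun f (ennreal l)) \<partial>lborel)"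
    unfolding Psi_int[OF f] by (intro nn_integral_mono mult_right_mono Pb_upper) auto
  also have "\<dots> = 2 * (\<integral>\<^sup>+ l\<in>{0..}. Wb w (distrib_fun f (ennreal l)) \<partial>lborel)"
  proof -
    have dm[measurable]: "(\<lambda>l. distrib_fun f (ennreal l)) \<in> borel_measurable borel"
      using distrib_measurable[OF f] .
    have Wm: "(\<lambda>l. Wb w (distrib_fun f (ennreal l))) \<in> borel_measurable borel"
      by (rule antimono_borel) (intro Wb_mono distrib_antimono[OF f] ennreal_leI)
    show ?thesis by (subst nn_integral_cmult[symmetric]) (use Wm in \<open>auto simp: ac_simps\<close>)
  qed
  also have "\<dots> = 2 * Lambda_norm w f" using layer_cake_Lambda[OF f weight_meas[OF w]] by simp
  finally show ?thesis .
qed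

lemma Psi_lower:
  fixes f :: "'a::euclidean_space \<Rightarrow> real"
  assumes f[measurable]: "f \<in> borel_measurable lebesgue"
  shows "ennreal (1 / (2 * C)) * Lambda_norm w f \<le> (SUP n. Psi w n f)"
proof -
  have dm[measurable]: "(\<lambda>l. distrib_fun f (ennreal l)) \<in> borel_measurable borel"
    using distrib_measurable[OF f] .
  have Wm: "(\<lambda>l. Wb w (distrib_fun f (ennreal l))) \<in> borel_measurable borel"
    by (rule antimono_borel) (intro Wb_mono distrib_antimono[OF f] ennreal_leI)
  have Pm'[measurable]: "(\<lambda>l. Pb w n (distrib_fun f (ennreal l))) \<in> borel_measurable borel" for n
    using Pb_meas[OF f] .
  have "ennreal (1 / (2 * C)) * Lambda_norm w f
      = (\<integral>\<^sup>+ l. ennreal (1 / (2 * C)) * (Wb w (distrib_fun f (ennreal l)) * indicator {0..} l) \<partial>lborel)"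
    unfolding layer_cake_Lambda[OF f weight_meas[OF w]]
    by (rule nn_integral_cmult[symmetric]) (use Wm in measurable)
  also have "\<dots> \<le> (\<integral>\<^sup>+ l. liminf (\<lambda>n. Pb w n (distrib_fun f (ennreal l)) * indicator {0..} l) \<partial>lborel)"
  proof (intro nn_integral_mono)
    fix l :: real
    show "ennreal (1 / (2 * C)) * (Wb w (distrib_fun f (ennreal l)) * indicator {0..} l)
      \<le> liminf (\<lambda>n. Pb w n (distrib_fun f (ennreal l)) * indicator {0..} l)"
      by (cases "l \<ge> 0") (simp_all add: Pb_lower)
  qed
  also have "\<dots> \<le> liminf (\<lambda>n. Psi w n f)"
    unfolding Psi_int[OF f] by (rule nn_integral_liminf) measurable
  also have "\<dots> \<le> (SUP n. Psi w n f)"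
    unfolding liminf_SUP_INF by (intro SUP_mono) (auto intro: INF_lower2[of _ _ _ "Psi w n f" for n])
  finally show ?thesis .
qed

end

lemma Psi_subadd:
  fixes f g :: "'a::euclidean_space \<Rightarrow> real"
  assumes f[measurable]: "f \<in> borel_measurable lebesgue" and g[measurable]: "g \<in> borel_measurable lebesgue"
  shows "Psi w n (\<lambda>x. f x + g x) \<le> Psi w n f + Psi w n g"
proof -
  have "Psi w n (\<lambda>x. f x + g x) \<le> (\<Sum>i\<in>{1..mm n}. ennreal (cf (Wr w) (hh n) (mm n) i) * (Phi (real i * hh n) f + Phi (real i * hh n) g))"
    unfolding Psi_def
    by (intro sum_mono mult_left_mono Phi_subadd[OF f g]) (use hh_pos[of n] in auto)
  also have "\<dots> = Psi w n f + Psi w n g"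
    unfolding Psi_def by (simp add: distrib_left sum.distrib)
  finally show ?thesis .
qed

lemma Psi_scale:
  fixes f :: "'a::euclidean_space \<Rightarrow> real"
  assumes f[measurable]: "f \<in> borel_measurable lebesgue"
  shows "Psi w n (\<lambda>x. a * f x) = ennreal \<bar>a\<bar> * Psi w n f"
  unfolding Psi_def Phi_scale[OF f] by (simp add: sum_distrib_left ac_simps)



lemma normable_if:
  assumes w: "is_weight w" and a: "0 < \<alpha>" "\<alpha> < 1" and R: "R1 w"
    and E: "Gamma_eq_Lambda \<alpha> w TYPE('a::euclidean_space)"
  shows "Gamma_normable \<alpha> w TYPE('a)"
proof -
  obtain C where qc: "qcW (Wr w) C" using qcW_of_R1[OF w R] by blast
  have C1: "C \<ge> 1" using qcW.C_ge[OF qc] .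
  obtain C0 where C0: "C0 > 0" and C0f: "\<And>f::'a \<Rightarrow> real. f \<in> borel_measurable lebesgue \<Longrightarrow>
      Gamma_norm \<alpha> w f \<le> ennreal C0 * Lambda_norm w f"
    using E unfolding Gamma_eq_Lambda_def by blast
  define S where "S f = (SUP n. Psi w n f)" for f :: "'a \<Rightarrow> real"
  define N where "N f = enn2real (S f)" for f :: "'a \<Rightarrow> real"
  have S_up: "S f \<le> 2 * Gamma_norm \<alpha> w f" if f: "f \<in> borel_measurable lebesgue" for f
  proof -
    have "S f \<le> 2 * Lambda_norm w f" unfolding S_def
      by (rule SUP_least) (rule Psi_upper[OF w qc f])
    also have "\<dots> \<le> 2 * Gamma_norm \<alpha> w f" by (intro mult_left_mono Lambda_le_Gamma a) auto
    finally show ?thesis .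
  qed
  have S_fin: "S f < \<infinity>" if f: "f \<in> Gamma_space \<alpha> w" for f
  proof -
    have "S f \<le> 2 * Gamma_norm \<alpha> w f" using f S_up unfolding Gamma_space_def by auto
    also have "\<dots> < \<infinity>" using f unfolding Gamma_space_def by (simp add: ennreal_mult_less_top)
    finally show ?thesis .
  qed
  have G_fin: "Gamma_norm \<alpha> w f < \<infinity>" if f: "f \<in> Gamma_space \<alpha> w" for f
    using f unfolding Gamma_space_def by auto
  have S_low: "Gamma_norm \<alpha> w f \<le> ennreal (C0 * (2 * C)) * S f" if f: "f \<in> borel_measurable lebesgue" for f
  proof -
    have "ennreal (1 / (2 * C)) * Lambda_norm w f \<le> S f" unfolding S_def by (rule Psi_lower[OF w qc f])
    then have "ennreal (2 * C) * (ennreal (1 / (2 * C)) * Lambda_norm w f) \<le> ennreal (2 * C) * S f"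
      by (rule mult_left_mono) simp
    moreover have "ennreal (2 * C) * ennreal (1 / (2 * C)) = 1"
      using C1 by (simp add: ennreal_mult[symmetric])
    ultimately have "Lambda_norm w f \<le> ennreal (2 * C) * S f" by (simp add: mult.assoc[symmetric])
    then have "ennreal C0 * Lambda_norm w f \<le> ennreal C0 * (ennreal (2 * C) * S f)" by (rule mult_left_mono) simp
    also have "\<dots> = ennreal (C0 * (2 * C)) * S f" using C0 C1 by (simp add: ennreal_mult mult.assoc)
    finally show ?thesis using C0f[OF f] by simp
  qed
  show ?thesis unfolding Gamma_normable_def
  proof (intro exI[of _ N] conjI ballI allI)
    fix f g :: "'a \<Rightarrow> real" assume f: "f \<in> Gamma_space \<alpha> w" and g: "g \<in> Gamma_space \<alpha> w"
    have fm: "f \<in> borel_measurable lebesgue" and gm: "g \<in> borel_measurable lebesgue"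
      using f g unfolding Gamma_space_def by auto
    have "S (\<lambda>x. f x + g x) \<le> S f + S g" unfolding S_def
    proof (rule SUP_least)
      fix n
      have "Psi w n (\<lambda>x. f x + g x) \<le> Psi w n f + Psi w n g" by (rule Psi_subadd[OF fm gm])
      also have "\<dots> \<le> (SUP n. Psi w n f) + (SUP n. Psi w n g)" by (intro add_mono SUP_upper) auto
      finally show "Psi w n (\<lambda>x. f x + g x) \<le> (SUP n. Psi w n f) + (SUP n. Psi w n g)" .
    qed
    then have "enn2real (S (\<lambda>x. f x + g x)) \<le> enn2real (S f + S g)"
      by (rule enn2real_mono) (use S_fin[OF f] S_fin[OF g] in simp)
    also have "\<dots> = enn2real (S f) + enn2real (S g)" by (rule enn2real_plus) (use S_fin[OF f] S_fin[OF g] in auto)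
    finally show "N (\<lambda>x. f x + g x) \<le> N f + N g" unfolding N_def .
  next
    fix f :: "'a \<Rightarrow> real" and c :: real assume f: "f \<in> Gamma_space \<alpha> w"
    have fm: "f \<in> borel_measurable lebesgue" using f unfolding Gamma_space_def by auto
    have "S (\<lambda>x. c * f x) = ennreal \<bar>c\<bar> * S f"
      unfolding S_def Psi_scale[OF fm] by (rule SUP_mult_left_ennreal[symmetric])
    then show "N (\<lambda>x. c * f x) = \<bar>c\<bar> * N f" unfolding N_def by (simp add: enn2real_mult)
  next
    show "\<exists>c C. c > 0 \<and> C > 0 \<and> (\<forall>f\<in>(Gamma_space \<alpha> w :: ('a \<Rightarrow> real) set).
          c * enn2real (Gamma_norm \<alpha> w f) \<le> N f \<and> N f \<le> C * enn2real (Gamma_norm \<alpha> w f))"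
    proof -
      have pos: "1 / (C0 * (2 * C)) > 0" using C0 C1 by simp
      have bnd: "1 / (C0 * (2 * C)) * enn2real (Gamma_norm \<alpha> w f) \<le> N f \<and> N f \<le> 2 * enn2real (Gamma_norm \<alpha> w f)"
        if f: "f \<in> Gamma_space \<alpha> w" for f :: "'a \<Rightarrow> real"
      proof
      have fm: "f \<in> borel_measurable lebesgue" using f unfolding Gamma_space_def by auto
      have "enn2real (S f) \<le> enn2real (2 * Gamma_norm \<alpha> w f)"
        by (rule enn2real_mono[OF S_up[OF fm]]) (use G_fin[OF f] in \<open>simp add: ennreal_mult_less_top\<close>)
      then show "N f \<le> 2 * enn2real (Gamma_norm \<alpha> w f)" unfolding N_def by (simp add: enn2real_mult)
      have "enn2real (Gamma_norm \<alpha> w f) \<le> enn2real (ennreal (C0 * (2 * C)) * S f)"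
        by (rule enn2real_mono[OF S_low[OF fm]]) (use S_fin[OF f] in \<open>simp add: ennreal_mult_less_top\<close>)
      also have "\<dots> = (C0 * (2 * C)) * N f" unfolding N_def using C0 C1 by (simp add: enn2real_mult)
      finally show "1 / (C0 * (2 * C)) * enn2real (Gamma_norm \<alpha> w f) \<le> N f"
        using C0 C1 by (simp add: field_simps)
    qed
      show ?thesis using pos bnd by (intro exI[of _ "1 / (C0 * (2 * C))"] exI[of _ "2::real"]) auto
    qed
  qed
qed


lemma epowr_SUP:
  assumes a: "a > 0"
  shows "epowr (SUP n. x n) a \<le> (SUP n::nat. epowr (x n) a)"
proof (rule dense_le)
  fix y assume y: "y < epowr (SUP n. x n) a"
  then have "y \<noteq> \<infinity>" by auto
  then obtain r where r: "y = ennreal r" "r \<ge> 0" by (cases y) auto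
  define z where "z = ennreal (r powr (1 / a))"
  have ez: "epowr z a = y" unfolding z_def r using r a
    by (simp add: epowr_ennreal powr_powr)
  have "z < (SUP n. x n)"
  proof (cases "(SUP n. x n) = \<infinity>")
    case True show ?thesis unfolding z_def True by simp
  next
    case False
    then obtain q where q: "(SUP n. x n) = ennreal q" "q \<ge> 0" by (cases "(SUP n. x n)") auto
    have "r < q powr a" using y q r by (simp add: epowr_ennreal ennreal_less_iff)
    then have "r powr (1 / a) < (q powr a) powr (1 / a)" using r a by (intro powr_less_mono2) auto
    also have "\<dots> = q" using a q by (simp add: powr_powr)
    finally show ?thesis unfolding z_def using q by (simp add: ennreal_less_iff)
  qed
  then obtain n where "z < x n" by (auto simp: less_SUP_iff)
  then have "epowr z a \<le> epowr (x n) a" using a by (intro epowr_mono) auto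
  also have "\<dots> \<le> (SUP n. epowr (x n) a)" by (rule SUP_upper) simp
  finally show "y \<le> (SUP n. epowr (x n) a)" using ez by simp
qed

lemma SUP_mult_incseq:
  fixes a b :: "nat \<Rightarrow> ennreal"
  assumes "incseq a" "incseq b"
  shows "(SUP n. a n) * (SUP n. b n) \<le> (SUP n. a n * b n)"
proof -
  have "(SUP n. a n) * (SUP n. b n) = (SUP n. b n) * (SUP n. a n)" by (rule mult.commute)
  also have "\<dots> = (SUP i. (SUP n. b n) * a i)" by (rule SUP_mult_left_ennreal)
  also have "\<dots> = (SUP i. a i * (SUP j. b j))" by (simp add: mult.commute)
  also have "\<dots> = (SUP i. SUP j. a i * b j)" by (simp add: SUP_mult_left_ennreal)
  also have "\<dots> \<le> (SUP n. a n * b n)"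
  proof (intro SUP_least)
    fix i j
    have "a i * b j \<le> a (max i j) * b (max i j)"
      using assms by (intro mult_mono) (auto simp: incseq_def)
    also have "\<dots> \<le> (SUP n. a n * b n)" by (rule SUP_upper) simp
    finally show "a i * b j \<le> (SUP n. a n * b n)" .
  qed
  finally show ?thesis .
qed

lemma epowr_measurable[measurable]:
  assumes [measurable]: "g \<in> borel_measurable M"
  shows "(\<lambda>x. epowr (g x) a) \<in> borel_measurable M"
  unfolding epowr_def by measurable

lemma max_rearr_measurable[measurable]:
  assumes f: "f \<in> borel_measurable lebesgue"
  shows "max_rearr f \<in> borel_measurable borel"
proof -
  have rm[measurable]: "rearr f \<in> borel_measurable borel" using rearr_measurable[OF f] .
  have S0: "{p \<in> space (lborel \<Otimes>\<^sub>M lborel). 0 < snd p \<and> snd p < (fst p::real)} \<in> sets (lborel \<Otimes>\<^sub>M lborel)"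
    by measurable
  have S: "{p::real\<times>real. 0 < snd p \<and> snd p < fst p} \<in> sets (lborel \<Otimes>\<^sub>M lborel)"
    using S0 by (simp add: space_pair_measure)
  have [measurable]: "(\<lambda>p::real\<times>real. indicator {0<..<fst p} (snd p) :: ennreal) \<in> borel_measurable (lborel \<Otimes>\<^sub>M lborel)"
  proof -
    have "(\<lambda>p::real\<times>real. indicator {0<..<fst p} (snd p) :: ennreal) = indicator {p::real\<times>real. 0 < snd p \<and> snd p < fst p}"
      by (auto simp: indicator_def fun_eq_iff)
    then show ?thesis using S by simp
  qed
  have "(\<lambda>t. \<integral>\<^sup>+ s. rearr f s * indicator {0<..<t} s \<partial>lborel) \<in> borel_measurable lborel"
    by (rule lborel.borel_measurable_nn_integral) measurable
  then have [measurable]: "(\<lambda>t. \<integral>\<^sup>+ s. rearr f s * indicator {0<..<t} s \<partial>lborel) \<in> borel_measurable borel"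
    by simp
  show ?thesis unfolding max_rearr_def by measurable
qed


lemma Gamma_SUP:
  fixes f :: "'a::euclidean_space \<Rightarrow> real" and g :: "nat \<Rightarrow> 'a \<Rightarrow> real"
  assumes f[measurable]: "f \<in> borel_measurable lebesgue"
    and g[measurable]: "\<And>n. g n \<in> borel_measurable lebesgue"
    and inc: "\<And>n x. \<bar>g n x\<bar> \<le> \<bar>g (Suc n) x\<bar>"
    and conv: "\<And>x l. l < \<bar>f x\<bar> \<Longrightarrow> \<exists>n. l < \<bar>g n x\<bar>"
    and a: "0 < \<alpha>" "\<alpha> < 1" and wm[measurable]: "w \<in> borel_measurable borel"
  shows "Gamma_norm \<alpha> w f \<le> (SUP n. Gamma_norm \<alpha> w (g n))"
proof -
  have inc2: "\<bar>g n x\<bar> \<le> \<bar>g m x\<bar>" if "n \<le> m" for n m x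
    using that by (induction m) (auto intro: order.trans[OF _ inc] simp: le_Suc_eq)
  have dist_SUP: "distrib_fun f l \<le> (SUP n. distrib_fun (g n) l)" for l
  proof (cases "l = \<infinity>")
    case True then show ?thesis by (simp add: distrib_fun_def)
  next
    case False
    then obtain r where r: "l = ennreal r" "r \<ge> 0" by (cases l) auto
    define A where "A n = {x. l < ennreal \<bar>g n x\<bar>}" for n
    have As: "range A \<subseteq> sets lebesgue" unfolding A_def using distrib_set_meas[OF g] by auto
    have Ai: "incseq A" unfolding A_def incseq_def
      using inc2 by (auto intro: order.strict_trans2 ennreal_leI)
    have "{x. l < ennreal \<bar>f x\<bar>} \<subseteq> \<Union> (range A)"
    proof
      fix x assume "x \<in> {x. l < ennreal \<bar>f x\<bar>}"
      then have "r < \<bar>f x\<bar>" using r by (simp add: ennreal_less_iff)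
      then obtain n where "r < \<bar>g n x\<bar>" using conv by blast
      then show "x \<in> \<Union> (range A)" unfolding A_def using r by (auto simp: ennreal_less_iff)
    qed
    then have "distrib_fun f l \<le> emeasure lebesgue (\<Union> (range A))"
      unfolding distrib_fun_def using As by (intro emeasure_mono) auto
    also have "\<dots> = (SUP n. emeasure lebesgue (A n))" using SUP_emeasure_incseq[OF As Ai] by simp
    finally show ?thesis unfolding A_def distrib_fun_def .
  qed
  have rearr_SUP: "rearr f t \<le> (SUP n. rearr (g n) t)" for t
  proof (rule dense_le)
    fix y assume "y < rearr f t"
    then have "ennreal t < distrib_fun f y" using rearr_less_iff[OF f] by blast
    then have "ennreal t < (SUP n. distrib_fun (g n) y)" using dist_SUP order.strict_trans2 by blast
    then obtain n where "ennreal t < distrib_fun (g n) y" by (auto simp: less_SUP_iff)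
    then have "y < rearr (g n) t" using rearr_less_iff[OF g] by blast
    then show "y \<le> (SUP n. rearr (g n) t)" by (meson SUP_upper UNIV_I less_imp_le order.strict_trans2)
  qed
  have rinc: "incseq (\<lambda>n. rearr (g n) t)" for t
    unfolding incseq_def by (auto intro!: rearr_mono_fun[OF g] inc2)
  have max_SUP: "max_rearr f t \<le> (SUP n. max_rearr (g n) t)" for t
  proof -
    have "(\<integral>\<^sup>+ s\<in>{0<..<t}. rearr f s \<partial>lborel) \<le> (\<integral>\<^sup>+ s. (SUP n. rearr (g n) s * indicator {0<..<t} s) \<partial>lborel)"
    proof (intro nn_integral_mono)
      fix s
      have "rearr f s * indicator {0<..<t} s \<le> (SUP n. rearr (g n) s) * indicator {0<..<t} s"
        by (intro mult_right_mono rearr_SUP) auto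
      also have "\<dots> = (SUP n. rearr (g n) s * indicator {0<..<t} s)"
        by (subst mult.commute) (simp add: SUP_mult_left_ennreal mult.commute)
      finally show "rearr f s * indicator {0<..<t} s \<le> (SUP n. rearr (g n) s * indicator {0<..<t} s)" .
    qed
    also have "\<dots> = (SUP n. \<integral>\<^sup>+ s\<in>{0<..<t}. rearr (g n) s \<partial>lborel)"
    proof (rule nn_integral_monotone_convergence_SUP[of "\<lambda>n s. rearr (g n) s * indicator {0<..<t} s" lborel])
      show "incseq (\<lambda>n s. rearr (g n) s * indicator {0<..<t} s)"
        using rinc unfolding incseq_def le_fun_def by (auto intro: mult_right_mono)
      fix n show "(\<lambda>s. rearr (g n) s * indicator {0<..<t} s) \<in> borel_measurable lborel"
        using rearr_measurable[OF g] by measurable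
    qed
    finally have "ennreal (1/t) * (\<integral>\<^sup>+ s\<in>{0<..<t}. rearr f s \<partial>lborel)
        \<le> ennreal (1/t) * (SUP n. \<integral>\<^sup>+ s\<in>{0<..<t}. rearr (g n) s \<partial>lborel)"
      by (rule mult_left_mono) simp
    also have "\<dots> = (SUP n. max_rearr (g n) t)" unfolding max_rearr_def by (rule SUP_mult_left_ennreal)
    finally show ?thesis unfolding max_rearr_def .
  qed
  have minc: "incseq (\<lambda>n. max_rearr (g n) t)" for t
    unfolding incseq_def by (auto intro!: max_rearr_mono_fun[OF g] inc2)
  define F where "F n t = epowr (rearr (g n) t) \<alpha> * epowr (max_rearr (g n) t) (1 - \<alpha>) * ennreal (w t) * indicator {0<..} t" for n t
  have Finc: "incseq F"
    unfolding F_def incseq_def le_fun_def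
    using a rinc minc by (auto simp: incseq_def intro!: mult_right_mono mult_mono epowr_mono)
  have Fm: "F n \<in> borel_measurable lborel" for n
  proof -
    have [measurable]: "rearr (g n) \<in> borel_measurable borel" "max_rearr (g n) \<in> borel_measurable borel"
      using rearr_measurable[OF g] max_rearr_measurable[OF g] by auto
    show ?thesis unfolding F_def by measurable
  qed
  have "Gamma_norm \<alpha> w f \<le> (\<integral>\<^sup>+ t. (SUP n. F n t) \<partial>lborel)"
    unfolding Gamma_norm_def
  proof (intro nn_integral_mono)
    fix t
    have "epowr (rearr f t) \<alpha> * epowr (max_rearr f t) (1 - \<alpha>)
        \<le> epowr (SUP n. rearr (g n) t) \<alpha> * epowr (SUP n. max_rearr (g n) t) (1 - \<alpha>)"
      using a by (intro mult_mono epowr_mono rearr_SUP max_SUP) auto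
    also have "\<dots> \<le> (SUP n. epowr (rearr (g n) t) \<alpha>) * (SUP n. epowr (max_rearr (g n) t) (1 - \<alpha>))"
      using a by (intro mult_mono epowr_SUP) auto
    also have "\<dots> \<le> (SUP n. epowr (rearr (g n) t) \<alpha> * epowr (max_rearr (g n) t) (1 - \<alpha>))"
      by (rule SUP_mult_incseq) (use a rinc minc in \<open>auto simp: incseq_def intro!: epowr_mono\<close>)
    finally have "epowr (rearr f t) \<alpha> * epowr (max_rearr f t) (1 - \<alpha>) * (ennreal (w t) * indicator {0<..} t)
      \<le> (SUP n. epowr (rearr (g n) t) \<alpha> * epowr (max_rearr (g n) t) (1 - \<alpha>)) * (ennreal (w t) * indicator {0<..} t)"
      by (rule mult_right_mono) simp
    also have "\<dots> = (SUP n. F n t)" unfolding F_def SUP_mult_right_ennreal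
      by (simp add: mult.assoc)
    finally show "epowr (rearr f t) \<alpha> * epowr (max_rearr f t) (1 - \<alpha>) * ennreal (w t) * indicator {0<..} t \<le> (SUP n. F n t)"
      by (simp add: mult.assoc)
  qed
  also have "\<dots> = (SUP n. integral\<^sup>N lborel (F n))"
    by (rule nn_integral_monotone_convergence_SUP[OF Finc Fm])
  also have "\<dots> = (SUP n. Gamma_norm \<alpha> w (g n))" unfolding F_def Gamma_norm_def by simp
  finally show ?thesis .
qed


lemma One_inner_Basis: "b \<in> Basis \<Longrightarrow> (One::'a::euclidean_space) \<bullet> b = 1"
  by (simp add: inner_sum_left sum.If_cases inner_Basis)

lemma emeasure_lebesgue_borel: "A \<in> sets borel \<Longrightarrow> emeasure lebesgue A = emeasure lborel A"
  by simp

lemma Wb_fin: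
  assumes w: "is_weight w" and u: "u < \<infinity>"
  shows "Wb w u < \<infinity>"
proof -
  obtain r where r: "u = ennreal r" "r \<ge> 0" using u by (cases u) auto
  show ?thesis
  proof (cases "r = 0")
    case True then show ?thesis using r by (simp add: Wb_zero)
  next
    case False
    then have "r > 0" using r by simp
    then show ?thesis using r Wb_Wr[OF w] by simp
  qed
qed

lemma ind_Gamma_space:
  fixes E :: "'a::euclidean_space set"
  assumes w: "is_weight w" and a: "0 < \<alpha>" "\<alpha> < 1" and c: "c > 0"
    and E: "E \<in> sets lebesgue" "emeasure lebesgue E < \<infinity>"
  shows "(\<lambda>x. c * indicator E x) \<in> Gamma_space \<alpha> w"
    and "Gamma_norm \<alpha> w (\<lambda>x. c * indicator E x) = ennreal c * Wb w (emeasure lebesgue E)"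
proof -
  show G: "Gamma_norm \<alpha> w (\<lambda>x. c * indicator E x) = ennreal c * Wb w (emeasure lebesgue E)"
    by (rule Gamma_ind[OF c E(1) a weight_meas[OF w]])
  show "(\<lambda>x. c * indicator E x) \<in> Gamma_space \<alpha> w"
    unfolding Gamma_space_def using E G Wb_fin[OF w E(2)] by (auto simp: ennreal_mult_less_top)
qed

lemma N_sum:
  fixes N :: "('a \<Rightarrow> real) \<Rightarrow> real" and GS :: "('a \<Rightarrow> real) set"
  assumes tri: "\<And>f g. f \<in> GS \<Longrightarrow> g \<in> GS \<Longrightarrow> N (\<lambda>x. f x + g x) \<le> N f + N g"
    and hom: "\<And>f c. f \<in> GS \<Longrightarrow> N (\<lambda>x. c * f x) = \<bar>c\<bar> * N f"
    and I: "finite I" and cl: "\<And>J. J \<subseteq> I \<Longrightarrow> (\<lambda>x. \<Sum>i\<in>J. F i x) \<in> GS"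
  shows "N (\<lambda>x. \<Sum>i\<in>I. F i x) \<le> (\<Sum>i\<in>I. N (F i))"
  using I cl
proof (induction I rule: finite_induct)
  case empty
  have z: "(\<lambda>x::'a. 0::real) \<in> GS" using empty.prems[of "{}"] by simp
  have "N (\<lambda>x. 0 * (0::real)) = \<bar>0\<bar> * N (\<lambda>x. 0)" by (rule hom[OF z])
  then show ?case by simp
next
  case (insert j I)
  have Fj: "F j \<in> GS" using insert.prems[of "{j}"] by simp
  have SI: "(\<lambda>x. \<Sum>i\<in>I. F i x) \<in> GS" using insert.prems[of I] by auto
  have "N (\<lambda>x. \<Sum>i\<in>insert j I. F i x) = N (\<lambda>x. F j x + (\<Sum>i\<in>I. F i x))"
    using insert.hyps by simp
  also have "\<dots> \<le> N (F j) + N (\<lambda>x. \<Sum>i\<in>I. F i x)" using tri[OF Fj SI] by simp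
  also have "\<dots> \<le> N (F j) + (\<Sum>i\<in>I. N (F i))" using insert.IH insert.prems by auto
  finally show ?case using insert.hyps by simp
qed


lemma cube_boxes:
  fixes s :: real and n :: nat
  assumes s: "s > 0" and n: "n > 0"
  obtains B :: "nat \<Rightarrow> 'a::euclidean_space set"
  where "\<And>i. B i \<in> sets borel" "\<And>i. emeasure lborel (B i) = ennreal (s / n)"
    "disjoint_family_on B UNIV"
proof -
  define d where "d = DIM('a)"
  have d: "d > 0" unfolding d_def by simp
  define l where "l = (s / n) powr (1 / d)"
  have l: "l > 0" unfolding l_def using s n by simp
  define B :: "nat \<Rightarrow> 'a set" where "B i = box ((2 * real i * l) *\<^sub>R One) (((2 * real i + 1) * l) *\<^sub>R One)" for i
  have memB: "x \<in> B i \<longleftrightarrow> (\<forall>b\<in>Basis. 2 * real i * l < x \<bullet> b \<and> x \<bullet> b < (2 * real i + 1) * l)" for x i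
    unfolding B_def mem_box by (simp add: One_inner_Basis)
  have "l ^ d = s / n"
  proof -
    have "l ^ d = l powr real d" using l by (simp add: powr_realpow)
    also have "\<dots> = (s / n) powr (1 / d * d)" unfolding l_def by (simp add: powr_powr)
    also have "\<dots> = s / n" using d s n by simp
    finally show ?thesis .
  qed
  then have mB: "emeasure lborel (B i) = ennreal (s / n)" for i
    unfolding B_def emeasure_lborel_box_eq using l
    by (simp add: One_inner_Basis inner_diff_left algebra_simps d_def)
  have disj: "disjoint_family_on B UNIV"
    unfolding disjoint_family_on_def
  proof (intro ballI impI)
    fix i j :: nat assume ij: "i \<noteq> j"
    show "B i \<inter> B j = {}"
    proof (rule ccontr)
      assume "B i \<inter> B j \<noteq> {}"
      then obtain x where x: "x \<in> B i" "x \<in> B j" by auto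
      obtain b :: 'a where b: "b \<in> Basis" using nonempty_Basis by blast
      have "2 * real i * l < (2 * real j + 1) * l" "2 * real j * l < (2 * real i + 1) * l"
        using x b memB by fastforce+
      then have "2 * real i < 2 * real j + 1" "2 * real j < 2 * real i + 1" using l by simp_all
      then have "i \<le> j" "j \<le> i" by linarith+
      then show False using ij by simp
    qed
  qed
  show ?thesis by (rule that[of B]) (use mB disj in \<open>auto simp: B_def\<close>)
qed

lemma R1_if_normable:
  assumes w: "is_weight w" and a: "0 < \<alpha>" "\<alpha> < 1"
    and Nb: "Gamma_normable \<alpha> w TYPE('a::euclidean_space)"
  shows "R1 w"
proof -
  obtain N :: "('a \<Rightarrow> real) \<Rightarrow> real" where
    tri: "\<And>f g. f \<in> Gamma_space \<alpha> w \<Longrightarrow> g \<in> Gamma_space \<alpha> w \<Longrightarrow> N (\<lambda>x. f x + g x) \<le> N f + N g"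
    and hom: "\<And>f c. f \<in> Gamma_space \<alpha> w \<Longrightarrow> N (\<lambda>x. c * f x) = \<bar>c\<bar> * N f"
    and eq: "\<exists>c C. c > 0 \<and> C > 0 \<and> (\<forall>f\<in>Gamma_space \<alpha> w.
          c * enn2real (Gamma_norm \<alpha> w f) \<le> N f \<and> N f \<le> C * enn2real (Gamma_norm \<alpha> w f))"
    using Nb unfolding Gamma_normable_def by blast
  obtain c C where c: "c > 0" and C: "C > 0"
    and lo: "\<And>f. f \<in> Gamma_space \<alpha> w \<Longrightarrow> c * enn2real (Gamma_norm \<alpha> w f) \<le> N f"
    and up: "\<And>f. f \<in> Gamma_space \<alpha> w \<Longrightarrow> N f \<le> C * enn2real (Gamma_norm \<alpha> w f)"
    using eq by blast
  have main: "(1 / s) * Wr w s \<le> ((2 * C / c) / r) * Wr w r" if rs: "0 < r" "r < s" for r s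
  proof -
    define n where "n = nat \<lceil>s / r\<rceil>"
    have sr: "s / r > 1" using rs by simp
    have n1: "real n \<ge> s / r" unfolding n_def by linarith
    have n2: "real n \<le> 2 * (s / r)" unfolding n_def using sr by linarith
    have npos: "n > 0" using n1 sr by simp
    have s: "s > 0" using rs by simp
    obtain B :: "nat \<Rightarrow> 'a set" where Bs: "\<And>i. B i \<in> sets borel"
      and Bm: "\<And>i. emeasure lborel (B i) = ennreal (s / n)" and Bd: "disjoint_family_on B UNIV"
      using cube_boxes[OF s npos] by blast
    have Bl: "B i \<in> sets lebesgue" for i using Bs by simp
    have Bml: "emeasure lebesgue (B i) = ennreal (s / n)" for i using Bs Bm by simp
    have UJ: "emeasure lebesgue (\<Union>i\<in>J. B i) = ennreal (card J * (s / n))" if "finite J" for J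
    proof -
      have "emeasure lebesgue (\<Union>i\<in>J. B i) = (\<Sum>i\<in>J. emeasure lebesgue (B i))"
        by (rule sum_emeasure[symmetric]) (use that Bl Bd in \<open>auto simp: disjoint_family_on_def\<close>)
      also have "\<dots> = ennreal (card J * (s / n))" using Bml s by (simp add: ennreal_of_nat_eq_real_of_nat flip: ennreal_mult)
      finally show ?thesis .
    qed
    have indJ: "(\<lambda>x. \<Sum>i\<in>J. indicator (B i) x :: real) = (\<lambda>x. 1 * indicator (\<Union>i\<in>J. B i) x)" if "finite J" for J
    proof -
      have "disjoint_family_on B J" using Bd by (auto simp: disjoint_family_on_def)
      then have "indicator (\<Union>(B ` J)) x = (\<Sum>y\<in>J. indicator (B y) x :: real)" for x
        by (rule indicator_UN_disjoint[OF that])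
      then show ?thesis by (intro ext) simp
    qed
    have GSJ: "(\<lambda>x. \<Sum>i\<in>J. indicator (B i) x) \<in> Gamma_space \<alpha> w"
      and GJ: "Gamma_norm \<alpha> w (\<lambda>x. \<Sum>i\<in>J. indicator (B i) x) = ennreal (Wr w (card J * (s / n)))"
      if J: "finite J" "J \<noteq> {}" for J
    proof -
      have pos: "card J * (s / n) > 0" using J s npos by (simp add: card_gt_0_iff)
      have sJ: "(\<Union>i\<in>J. B i) \<in> sets lebesgue" using Bl J by auto
      show "(\<lambda>x. \<Sum>i\<in>J. indicator (B i) x) \<in> Gamma_space \<alpha> w"
        unfolding indJ[OF J(1)] by (rule ind_Gamma_space(1)[OF w a _ sJ]) (auto simp: UJ[OF J(1)])
      have "Gamma_norm \<alpha> w (\<lambda>x. 1 * indicator (\<Union>i\<in>J. B i) x) = ennreal 1 * Wb w (emeasure lebesgue (\<Union>i\<in>J. B i))"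
        by (rule ind_Gamma_space(2)[OF w a _ sJ]) (auto simp: UJ[OF J(1)])
      also have "\<dots> = ennreal (Wr w (card J * (s / n)))"
        unfolding UJ[OF J(1)] using Wb_Wr[OF w pos] by simp
      finally show "Gamma_norm \<alpha> w (\<lambda>x. \<Sum>i\<in>J. indicator (B i) x) = ennreal (Wr w (card J * (s / n)))"
        unfolding indJ[OF J(1)] .
    qed
    have GS0: "(\<lambda>x. \<Sum>i\<in>J. indicator (B i) x) \<in> Gamma_space \<alpha> w" if "J \<subseteq> {..<n}" for J
    proof (cases "J = {}")
      case True
      have G0: "(\<lambda>x. \<Sum>i\<in>{0}. indicator (B i) x :: real) \<in> Gamma_space \<alpha> w" using GSJ[of "{0}"] by simp
      have "Gamma_norm \<alpha> w (\<lambda>x::'a. 0::real) \<le> Gamma_norm \<alpha> w (\<lambda>x. \<Sum>i\<in>{0}. indicator (B i) x :: real)"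
        using Gamma_mono_fun[where f="\<lambda>x. \<Sum>i\<in>{0}. indicator (B i) x :: real" and g="\<lambda>x. 0::real", OF _ _ a] G0
        by (auto simp: Gamma_space_def)
      then have "(\<lambda>x::'a. 0::real) \<in> Gamma_space \<alpha> w" using G0 unfolding Gamma_space_def by auto
      then show ?thesis using True by simp
    next
      case False then show ?thesis using GSJ[of J] that finite_subset by blast
    qed
    have "c * Wr w s \<le> N (\<lambda>x. \<Sum>i\<in>{..<n}. indicator (B i) x)"
    proof -
      have "c * enn2real (Gamma_norm \<alpha> w (\<lambda>x. \<Sum>i\<in>{..<n}. indicator (B i) x)) \<le> N (\<lambda>x. \<Sum>i\<in>{..<n}. indicator (B i) x)"
        by (rule lo[OF GS0]) simp
      moreover have "enn2real (Gamma_norm \<alpha> w (\<lambda>x. \<Sum>i\<in>{..<n}. indicator (B i) x)) = Wr w s"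
      proof -
        have "{..<n} \<noteq> {}" using npos by auto
        then show ?thesis using GJ[of "{..<n}"] Wr_nonneg[OF w] npos by simp
      qed
      ultimately show ?thesis by simp
    qed
    also have "\<dots> \<le> (\<Sum>i\<in>{..<n}. N (\<lambda>x. indicator (B i) x))"
      using N_sum[of "Gamma_space \<alpha> w" N "{..<n}" "\<lambda>i x. indicator (B i) x"] tri hom GS0 by simp
    also have "\<dots> \<le> (\<Sum>i\<in>{..<n}. C * Wr w r)"
    proof (intro sum_mono)
      fix i assume "i \<in> {..<n}"
      have GSi: "(\<lambda>x. \<Sum>i\<in>{i}. indicator (B i) x) \<in> Gamma_space \<alpha> w" using GSJ[of "{i}"] by simp
      have "N (\<lambda>x. indicator (B i) x) \<le> C * enn2real (Gamma_norm \<alpha> w (\<lambda>x. \<Sum>i\<in>{i}. indicator (B i) x))"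
        using up[OF GSi] by simp
      also have "enn2real (Gamma_norm \<alpha> w (\<lambda>x. \<Sum>i\<in>{i}. indicator (B i) x)) = Wr w (s / n)"
        using GJ[of "{i}"] Wr_nonneg[OF w] by simp
      also have "Wr w (s / n) \<le> Wr w r"
      proof (rule Wr_mono[OF w])
        show "0 \<le> s / n" using s by simp
        show "s / n \<le> r" using n1 rs npos by (simp add: field_simps)
      qed
      finally show "N (\<lambda>x. indicator (B i) x) \<le> C * Wr w r" using C by simp
    qed
    also have "\<dots> = real n * C * Wr w r" by simp
    also have "\<dots> \<le> 2 * (s / r) * C * Wr w r"
      using n2 C Wr_nonneg[OF w, of r] by (intro mult_right_mono) auto
    finally have "c * Wr w s \<le> 2 * (s / r) * C * Wr w r" .
    then show ?thesis using c s rs by (simp add: field_simps)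
  qed
  show ?thesis unfolding R1_def
    using main unfolding Wr_def by blast
qed


lemma step_sum:
  fixes h y :: real and K :: nat
  assumes h: "h > 0" and y: "y \<ge> 0"
  shows "(\<Sum>k\<in>{1..K}. (if real k * h \<le> y then h else 0)) = min (real K * h) (h * of_int \<lfloor>y / h\<rfloor>)"
proof -
  define t where "t = nat \<lfloor>y / h\<rfloor>"
  have tt: "real t = of_int \<lfloor>y / h\<rfloor>" unfolding t_def using y h by simp
  have iff: "real k * h \<le> y \<longleftrightarrow> k \<le> t" for k :: nat
  proof -
    have "real k * h \<le> y \<longleftrightarrow> real k \<le> y / h" using h by (simp add: field_simps)
    also have "\<dots> \<longleftrightarrow> int k \<le> \<lfloor>y / h\<rfloor>" by (simp add: le_floor_iff)
    also have "\<dots> \<longleftrightarrow> k \<le> t" unfolding t_def using y h by (simp add: le_nat_iff)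
    finally show ?thesis .
  qed
  have "(\<Sum>k\<in>{1..K}. (if real k * h \<le> y then h else 0)) = (\<Sum>k\<in>{k\<in>{1..K}. real k * h \<le> y}. h)"
    by (rule sum.inter_filter[symmetric]) simp
  also have "{k\<in>{1..K}. real k * h \<le> y} = {1..min K t}"
  proof (intro set_eqI)
    fix k show "k \<in> {k\<in>{1..K}. real k * h \<le> y} \<longleftrightarrow> k \<in> {1..min K t}" using iff[of k] by simp
  qed
  also have "(\<Sum>k\<in>{1..min K t}. h) = real (min K t) * h" by simp
  also have "\<dots> = min (real K * h) (h * of_int \<lfloor>y / h\<rfloor>)"
  proof (cases "K \<le> t")
    case True
    then have "real K * h \<le> h * real t" using h by (simp add: mult.commute mult_right_mono)
    then show ?thesis using True tt by (simp add: min_absorb1)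
  next
    case False
    then have "h * real t \<le> real K * h" using h by (simp add: mult.commute mult_right_mono)
    then show ?thesis using False tt by (simp add: min_absorb2 mult.commute)
  qed
  finally show ?thesis .
qed

lemma floor_double:
  fixes y h :: real
  assumes h: "h > 0"
  shows "h * of_int \<lfloor>y / h\<rfloor> \<le> (h / 2) * of_int \<lfloor>y / (h / 2)\<rfloor>"
proof -
  have "2 * \<lfloor>y / h\<rfloor> \<le> \<lfloor>y / (h / 2)\<rfloor>"
  proof -
    have z: "y / (h / 2) = 2 * (y / h)" using h by (simp add: field_simps)
    have "real_of_int \<lfloor>y / h\<rfloor> \<le> y / h" by (rule of_int_floor_le)
    then have "2 * real_of_int \<lfloor>y / h\<rfloor> \<le> 2 * (y / h)" by (rule mult_left_mono) simp
    then have "real_of_int (2 * \<lfloor>y / h\<rfloor>) \<le> y / (h / 2)" unfolding z by (simp only: of_int_mult of_int_numeral)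
    then show ?thesis by (simp add: le_floor_iff)
  qed
  then have "real_of_int (2 * \<lfloor>y / h\<rfloor>) \<le> real_of_int \<lfloor>y / (h / 2)\<rfloor>" by linarith
  then have "(h / 2) * real_of_int (2 * \<lfloor>y / h\<rfloor>) \<le> (h / 2) * real_of_int \<lfloor>y / (h / 2)\<rfloor>"
    using h by (intro mult_left_mono) auto
  then show ?thesis by simp
qed


definition hq :: "nat \<Rightarrow> real" where "hq n = 1 / 2 ^ n"
definition Kq :: "nat \<Rightarrow> nat" where "Kq n = n * 2 ^ n"
definition Eq :: "('a::euclidean_space \<Rightarrow> real) \<Rightarrow> nat \<Rightarrow> nat \<Rightarrow> 'a set" where
  "Eq f n k = {x. x \<in> ball 0 (real n) \<and> real k * hq n \<le> \<bar>f x\<bar>}"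
definition gq :: "('a::euclidean_space \<Rightarrow> real) \<Rightarrow> nat \<Rightarrow> 'a \<Rightarrow> real" where
  "gq f n x = (\<Sum>k\<in>{1..Kq n}. hq n * indicator (Eq f n k) x)"

lemma hq_pos: "hq n > 0" unfolding hq_def by simp

lemma Kq_hq: "real (Kq n) * hq n = real n" unfolding Kq_def hq_def by simp

lemma gq_closed:
  "gq f n x = indicator (ball 0 (real n)) x * min (real n) (hq n * of_int \<lfloor>\<bar>f x\<bar> / hq n\<rfloor>)"
proof (cases "x \<in> ball 0 (real n)")
  case True
  have "gq f n x = (\<Sum>k\<in>{1..Kq n}. (if real k * hq n \<le> \<bar>f x\<bar> then hq n else 0))"
    unfolding gq_def Eq_def using True by (intro sum.cong) (auto simp: indicator_def)
  also have "\<dots> = min (real (Kq n) * hq n) (hq n * of_int \<lfloor>\<bar>f x\<bar> / hq n\<rfloor>)"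
    by (rule step_sum[OF hq_pos]) simp
  finally show ?thesis using True Kq_hq by simp
next
  case False
  then show ?thesis unfolding gq_def Eq_def by (simp add: indicator_def)
qed

lemma gq_nonneg: "gq f n x \<ge> 0"
  unfolding gq_def by (intro sum_nonneg mult_nonneg_nonneg) (auto simp: less_imp_le[OF hq_pos])

lemma gq_le: "gq f n x \<le> real n * indicator (ball 0 (real n)) x"
  unfolding gq_closed by (auto simp: indicator_def)

lemma gq_le_f: "gq f n x \<le> \<bar>f x\<bar>"
proof -
  have "hq n * of_int \<lfloor>\<bar>f x\<bar> / hq n\<rfloor> \<le> hq n * (\<bar>f x\<bar> / hq n)"
    using hq_pos[of n] by (intro mult_left_mono) auto
  also have "\<dots> = \<bar>f x\<bar>" using hq_pos[of n] by simp
  finally show ?thesis unfolding gq_closed by (auto simp: indicator_def)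
qed

lemma gq_inc: "gq f n x \<le> gq f (Suc n) x"
proof -
  have hs: "hq (Suc n) = hq n / 2" unfolding hq_def by simp
  have b: "indicator (ball 0 (real n)) x \<le> (indicator (ball 0 (real (Suc n))) x :: real)"
    by (auto simp: indicator_def)
  have fl: "hq n * of_int \<lfloor>\<bar>f x\<bar> / hq n\<rfloor> \<le> hq (Suc n) * of_int \<lfloor>\<bar>f x\<bar> / hq (Suc n)\<rfloor>"
    unfolding hs by (rule floor_double[OF hq_pos])
  have nn: "0 \<le> hq n * of_int \<lfloor>\<bar>f x\<bar> / hq n\<rfloor>" using hq_pos[of n] by simp
  have "min (real n) (hq n * of_int \<lfloor>\<bar>f x\<bar> / hq n\<rfloor>) \<le> min (real (Suc n)) (hq (Suc n) * of_int \<lfloor>\<bar>f x\<bar> / hq (Suc n)\<rfloor>)"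
    by (rule min.mono) (use fl in simp_all)
  then show ?thesis unfolding gq_closed using b nn
    by (auto simp: indicator_def)
qed

lemma gq_conv:
  assumes l: "l < \<bar>f x\<bar>"
  shows "\<exists>n. l < \<bar>gq f n x\<bar>"
proof -
  define e where "e = \<bar>f x\<bar> - l"
  have e: "e > 0" unfolding e_def using l by simp
  obtain n :: nat where n: "max (norm x) (max \<bar>f x\<bar> (1 / e)) < n" using reals_Archimedean2 by blast
  have xb: "x \<in> ball 0 (real n)" using n by simp
  have "real n < 2 ^ n" by (rule of_nat_less_two_power)
  then have "1 / e < 2 ^ n" using n by linarith
  then have he: "hq n < e" unfolding hq_def using e by (simp add: field_simps)
  have "\<bar>f x\<bar> / hq n - 1 < of_int \<lfloor>\<bar>f x\<bar> / hq n\<rfloor>" by linarith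
  then have "hq n * (\<bar>f x\<bar> / hq n - 1) < hq n * of_int \<lfloor>\<bar>f x\<bar> / hq n\<rfloor>"
    using hq_pos[of n] by (intro mult_strict_left_mono) auto
  then have "\<bar>f x\<bar> - hq n < hq n * of_int \<lfloor>\<bar>f x\<bar> / hq n\<rfloor>"
    using hq_pos[of n] by (simp add: right_diff_distrib)
  then have "l < hq n * of_int \<lfloor>\<bar>f x\<bar> / hq n\<rfloor>" using he unfolding e_def by linarith
  moreover have "l < real n" using n l by linarith
  ultimately have "l < gq f n x" unfolding gq_closed using xb by simp
  then show ?thesis using gq_nonneg[of f n x] by (intro exI[of _ n]) simp
qed

lemma Eq_meas:
  assumes f: "f \<in> borel_measurable lebesgue"
  shows "Eq f n k \<in> sets lebesgue"
proof -
  have e: "Eq f n k = ball 0 (real n) \<inter> {x \<in> space lebesgue. real k * hq n \<le> \<bar>f x\<bar>}"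
    unfolding Eq_def by auto
  have A: "{x \<in> space lebesgue. real k * hq n \<le> \<bar>f x\<bar>} \<in> sets lebesgue" using f by measurable
  have B: "ball 0 (real n) \<in> sets lebesgue" by simp
  show ?thesis unfolding e by (rule sets.Int[OF B A])
qed

lemma Eq_fin: "emeasure lebesgue (Eq f n k) < \<infinity>"
proof -
  have "emeasure lebesgue (Eq f n k) \<le> emeasure lebesgue (ball (0::'a) (real n))"
    by (rule emeasure_mono) (auto simp: Eq_def)
  also have "\<dots> = emeasure lborel (ball (0::'a) (real n))" by simp
  also have "\<dots> < \<infinity>" by (rule emeasure_lborel_ball_finite)
  finally show ?thesis .
qed


lemma levels_le_Lambda:
  fixes f :: "'a::euclidean_space \<Rightarrow> real" and E :: "nat \<Rightarrow> 'a set"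
  assumes f[measurable]: "f \<in> borel_measurable lebesgue" and w: "is_weight w" and h: "h > 0"
    and E: "\<And>k. k \<ge> 1 \<Longrightarrow> E k \<subseteq> {x. real k * h \<le> \<bar>f x\<bar>}"
  shows "(\<Sum>k\<in>{1..K}. ennreal h * Wb w (emeasure lebesgue (E k))) \<le> Lambda_norm w f"
proof -
  have dm[measurable]: "(\<lambda>l. distrib_fun f (ennreal l)) \<in> borel_measurable borel"
    using distrib_measurable[OF f] .
  have Wm[measurable]: "(\<lambda>l. Wb w (distrib_fun f (ennreal l))) \<in> borel_measurable borel"
    by (rule antimono_borel) (intro Wb_mono distrib_antimono[OF f] ennreal_leI)
  define I where "I k = {real (k - 1) * h ..< real k * h}" for k :: nat
  have Ik: "ennreal h * Wb w (emeasure lebesgue (E k)) \<le> (\<integral>\<^sup>+ l. Wb w (distrib_fun f (ennreal l)) * indicator (I k) l \<partial>lborel)"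
    if k: "k \<in> {1..K}" for k
  proof -
    have rk: "real (k - 1) = real k - 1" using k by (simp add: of_nat_diff)
    have "ennreal h * Wb w (emeasure lebesgue (E k)) = (\<integral>\<^sup>+ l. Wb w (emeasure lebesgue (E k)) * indicator (I k) l \<partial>lborel)"
      unfolding I_def using h rk by (simp add: nn_integral_cmult_indicator algebra_simps mult.commute)
    also have "\<dots> \<le> (\<integral>\<^sup>+ l. Wb w (distrib_fun f (ennreal l)) * indicator (I k) l \<partial>lborel)"
    proof (intro nn_integral_mono)
      fix l
      show "Wb w (emeasure lebesgue (E k)) * indicator (I k) l \<le> Wb w (distrib_fun f (ennreal l)) * indicator (I k) l"
      proof (cases "l \<in> I k")
        case True
        have nn: "0 \<le> (real k - 1) * h" using k h by simp
        have l0: "(real k - 1) * h \<le> l" "l < real k * h" using True rk unfolding I_def by auto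
        have l: "0 \<le> l" "l < real k * h" using l0 nn by linarith+
        have "E k \<subseteq> {x. ennreal l < ennreal \<bar>f x\<bar>}"
          using E[of k] k l by (auto simp: ennreal_less_iff)
        then have "emeasure lebesgue (E k) \<le> distrib_fun f (ennreal l)"
          unfolding distrib_fun_def by (rule emeasure_mono) (rule distrib_set_meas[OF f])
        then show ?thesis using True by (simp add: Wb_mono)
      qed simp
    qed
    finally show ?thesis .
  qed
  have "(\<Sum>k\<in>{1..K}. ennreal h * Wb w (emeasure lebesgue (E k)))
      \<le> (\<Sum>k\<in>{1..K}. (\<integral>\<^sup>+ l. Wb w (distrib_fun f (ennreal l)) * indicator (I k) l \<partial>lborel))"
    by (intro sum_mono Ik)
  also have "\<dots> = (\<integral>\<^sup>+ l. (\<Sum>k\<in>{1..K}. Wb w (distrib_fun f (ennreal l)) * indicator (I k) l) \<partial>lborel)"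
    by (rule nn_integral_sum[symmetric]) (unfold I_def, measurable)
  also have "\<dots> \<le> (\<integral>\<^sup>+ l\<in>{0..}. Wb w (distrib_fun f (ennreal l)) \<partial>lborel)"
  proof (intro nn_integral_mono)
    fix l :: real
    have disj: "disjoint_family_on I {1..K}"
      unfolding disjoint_family_on_def
    proof (intro ballI impI)
      fix i j assume i: "i \<in> {1..K}" and j: "j \<in> {1..K}" and ij: "i \<noteq> j"
      show "I i \<inter> I j = {}"
      proof (rule ccontr)
        assume "I i \<inter> I j \<noteq> {}"
        then obtain y where y: "y \<in> I i" "y \<in> I j" by auto
        have ri: "real (i - 1) = real i - 1" and rj: "real (j - 1) = real j - 1"
          using i j by (auto simp: of_nat_diff)
        have "(real i - 1) * h < real j * h" "(real j - 1) * h < real i * h"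
          using y ri rj unfolding I_def by auto
        then have "real i - 1 < real j" "real j - 1 < real i" using h by simp_all
        then show False using ij by linarith
      qed
    qed
    have "(\<Sum>k\<in>{1..K}. indicator (I k) l :: ennreal) = indicator (\<Union>(I ` {1..K})) l"
      by (rule indicator_UN_disjoint[symmetric]) (use disj in auto)
    also have "\<dots> \<le> indicator {0..} l"
    proof -
      have "\<Union>(I ` {1..K}) \<subseteq> {0..}"
      proof
        fix y assume "y \<in> \<Union>(I ` {1..K})"
        then obtain k where k: "k \<in> {1..K}" "y \<in> I k" by auto
        have "0 \<le> real (k - 1) * h" using h by simp
        then show "y \<in> {0..}" using k unfolding I_def by auto
      qed
      then show ?thesis by (auto simp: indicator_def)
    qed
    finally have "(\<Sum>k\<in>{1..K}. indicator (I k) l :: ennreal) \<le> indicator {0..} l" .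
    then have "Wb w (distrib_fun f (ennreal l)) * (\<Sum>k\<in>{1..K}. indicator (I k) l) \<le> Wb w (distrib_fun f (ennreal l)) * indicator {0..} l"
      by (rule mult_left_mono) simp
    then show "(\<Sum>k\<in>{1..K}. Wb w (distrib_fun f (ennreal l)) * indicator (I k) l) \<le> Wb w (distrib_fun f (ennreal l)) * indicator {0..} l"
      by (simp add: sum_distrib_left)
  qed
  also have "\<dots> = Lambda_norm w f" using layer_cake_Lambda[OF f weight_meas[OF w]] by simp
  finally show ?thesis .
qed


lemma Gamma_eq_if_normable:
  assumes w: "is_weight w" and a: "0 < \<alpha>" "\<alpha> < 1"
    and Nb: "Gamma_normable \<alpha> w TYPE('a::euclidean_space)"
  shows "Gamma_eq_Lambda \<alpha> w TYPE('a)"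
proof -
  obtain N :: "('a \<Rightarrow> real) \<Rightarrow> real" where
    tri: "\<And>f g. f \<in> Gamma_space \<alpha> w \<Longrightarrow> g \<in> Gamma_space \<alpha> w \<Longrightarrow> N (\<lambda>x. f x + g x) \<le> N f + N g"
    and hom: "\<And>f c. f \<in> Gamma_space \<alpha> w \<Longrightarrow> N (\<lambda>x. c * f x) = \<bar>c\<bar> * N f"
    and eq: "\<exists>c C. c > 0 \<and> C > 0 \<and> (\<forall>f\<in>Gamma_space \<alpha> w.
          c * enn2real (Gamma_norm \<alpha> w f) \<le> N f \<and> N f \<le> C * enn2real (Gamma_norm \<alpha> w f))"
    using Nb unfolding Gamma_normable_def by blast
  obtain c C where c: "c > 0" and C: "C > 0"
    and lo: "\<And>f. f \<in> Gamma_space \<alpha> w \<Longrightarrow> c * enn2real (Gamma_norm \<alpha> w f) \<le> N f"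
    and up: "\<And>f. f \<in> Gamma_space \<alpha> w \<Longrightarrow> N f \<le> C * enn2real (Gamma_norm \<alpha> w f)"
    using eq by blast
  have wm[measurable]: "w \<in> borel_measurable borel" using weight_meas[OF w] .
  have key: "Gamma_norm \<alpha> w f \<le> ennreal (C / c) * Lambda_norm w f"
    if f[measurable]: "f \<in> borel_measurable lebesgue" for f :: "'a \<Rightarrow> real"
  proof -
    have Em[measurable]: "Eq f n k \<in> sets lebesgue" for n k using Eq_meas[OF f] .
    have gm[measurable]: "gq f n \<in> borel_measurable lebesgue" for n
      unfolding gq_def[abs_def] by measurable
    have step: "Gamma_norm \<alpha> w (gq f n) \<le> ennreal (C / c) * Lambda_norm w f" for n
    proof -
      define h where "h = hq n"
      have h: "h > 0" unfolding h_def by (rule hq_pos)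
      define F where "F k x = h * indicator (Eq f n k) x" for k x
      define M where "M = real (Suc n)"
      define Bl where "Bl = ball (0::'a) (real (Suc n))"
      have Bls: "Bl \<in> sets lebesgue" unfolding Bl_def by simp
      have Blf: "emeasure lebesgue Bl < \<infinity>" unfolding Bl_def using emeasure_lborel_ball_finite by simp
      have MB: "(\<lambda>x. M * indicator Bl x) \<in> Gamma_space \<alpha> w"
        by (rule ind_Gamma_space(1)[OF w a _ Bls Blf]) (simp add: M_def)
      have GSJ: "(\<lambda>x. \<Sum>k\<in>J. F k x) \<in> Gamma_space \<alpha> w" if J: "J \<subseteq> {1..Kq n}" for J
      proof -
        have meas: "(\<lambda>x. \<Sum>k\<in>J. F k x) \<in> borel_measurable lebesgue" unfolding F_def by measurable
        have bnd: "\<bar>\<Sum>k\<in>J. F k x\<bar> \<le> \<bar>M * indicator Bl x\<bar>" for x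
        proof -
          have nn: "0 \<le> F k x" for k unfolding F_def using h by simp
          have "(\<Sum>k\<in>J. F k x) \<le> (\<Sum>k\<in>{1..Kq n}. F k x)"
            by (rule sum_mono2) (use J nn in auto)
          also have "\<dots> = gq f n x" unfolding F_def gq_def h_def ..
          also have "\<dots> \<le> real n * indicator (ball 0 (real n)) x" by (rule gq_le)
          also have "\<dots> \<le> M * indicator Bl x" unfolding M_def Bl_def by (auto simp: indicator_def)
          finally show ?thesis using nn by (simp add: sum_nonneg M_def)
        qed
        have "Gamma_norm \<alpha> w (\<lambda>x. \<Sum>k\<in>J. F k x) \<le> Gamma_norm \<alpha> w (\<lambda>x. M * indicator Bl x)"
          by (rule Gamma_mono_fun[OF _ bnd a]) (use MB in \<open>simp add: Gamma_space_def\<close>)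
        then show ?thesis using MB meas unfolding Gamma_space_def by auto
      qed
      have gsum: "gq f n = (\<lambda>x. \<Sum>k\<in>{1..Kq n}. F k x)" unfolding gq_def F_def h_def by (rule ext) simp
      have gGS: "gq f n \<in> Gamma_space \<alpha> w" unfolding gsum by (rule GSJ) simp
      have FGS: "F k \<in> Gamma_space \<alpha> w" and FG: "Gamma_norm \<alpha> w (F k) = ennreal h * Wb w (emeasure lebesgue (Eq f n k))" for k
        unfolding F_def[abs_def] using ind_Gamma_space[OF w a h Em Eq_fin] by auto
      define A where "A k = enn2real (Wb w (emeasure lebesgue (Eq f n k)))" for k
      have A: "ennreal (A k) = Wb w (emeasure lebesgue (Eq f n k))" for k
      proof -
        have fin: "Wb w (emeasure lebesgue (Eq f n k)) < top" using Wb_fin[OF w Eq_fin, of f n k] by simp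
        show ?thesis unfolding A_def by (rule ennreal_enn2real[OF fin])
      qed
      have "c * enn2real (Gamma_norm \<alpha> w (gq f n)) \<le> N (gq f n)" by (rule lo[OF gGS])
      also have "\<dots> \<le> (\<Sum>k\<in>{1..Kq n}. N (F k))"
        unfolding gsum using N_sum[of "Gamma_space \<alpha> w" N "{1..Kq n}" F] tri hom GSJ by blast
      also have "\<dots> \<le> (\<Sum>k\<in>{1..Kq n}. C * (h * A k))"
      proof (intro sum_mono)
        fix k
        have "N (F k) \<le> C * enn2real (Gamma_norm \<alpha> w (F k))" by (rule up[OF FGS])
        also have "enn2real (Gamma_norm \<alpha> w (F k)) = h * A k"
          unfolding FG A_def using h by (simp add: enn2real_mult)
        finally show "N (F k) \<le> C * (h * A k)" .
      qed
      finally have r: "c * enn2real (Gamma_norm \<alpha> w (gq f n)) \<le> (\<Sum>k\<in>{1..Kq n}. C * (h * A k))" .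
      have Gfin: "Gamma_norm \<alpha> w (gq f n) < \<infinity>" using gGS unfolding Gamma_space_def by auto
      have Anonneg: "0 \<le> A k" for k unfolding A_def by simp
      have "ennreal c * Gamma_norm \<alpha> w (gq f n) = ennreal (c * enn2real (Gamma_norm \<alpha> w (gq f n)))"
        using Gfin c by (simp add: ennreal_mult)
      also have "\<dots> \<le> ennreal (\<Sum>k\<in>{1..Kq n}. C * (h * A k))" by (rule ennreal_leI[OF r])
      also have "\<dots> = (\<Sum>k\<in>{1..Kq n}. ennreal (C * (h * A k)))"
        by (rule sum_ennreal[symmetric]) (use C h Anonneg in auto)
      also have "\<dots> = ennreal C * (\<Sum>k\<in>{1..Kq n}. ennreal h * Wb w (emeasure lebesgue (Eq f n k)))"
        unfolding sum_distrib_left using C h Anonneg by (intro sum.cong refl) (simp add: ennreal_mult A)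
      also have "\<dots> \<le> ennreal C * Lambda_norm w f"
      proof (intro mult_left_mono levels_le_Lambda[OF f w h])
        fix k :: nat assume "k \<ge> 1"
        show "Eq f n k \<subseteq> {x. real k * h \<le> \<bar>f x\<bar>}" unfolding Eq_def h_def by auto
      qed simp
      finally have "ennreal c * Gamma_norm \<alpha> w (gq f n) \<le> ennreal C * Lambda_norm w f" .
      then have "ennreal (1 / c) * (ennreal c * Gamma_norm \<alpha> w (gq f n)) \<le> ennreal (1 / c) * (ennreal C * Lambda_norm w f)"
        by (rule mult_left_mono) simp
      moreover have "ennreal (1 / c) * ennreal c = 1" using c by (simp add: ennreal_mult[symmetric])
      moreover have "ennreal (1 / c) * ennreal C = ennreal (C / c)" using c C by (simp add: ennreal_mult[symmetric])
      ultimately show ?thesis by (simp add: mult.assoc[symmetric])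
    qed
    have "Gamma_norm \<alpha> w f \<le> (SUP n. Gamma_norm \<alpha> w (gq f n))"
    proof (rule Gamma_SUP[OF f gm _ _ a wm])
      fix n x show "\<bar>gq f n x\<bar> \<le> \<bar>gq f (Suc n) x\<bar>" using gq_inc[of f n x] gq_nonneg[of f n x] gq_nonneg[of f "Suc n" x] by simp
    next
      fix x l assume "l < \<bar>f x\<bar>" then show "\<exists>n. l < \<bar>gq f n x\<bar>" by (rule gq_conv)
    qed
    also have "\<dots> \<le> ennreal (C / c) * Lambda_norm w f" by (rule SUP_least) (rule step)
    finally show ?thesis .
  qed
  define K where "K = max (C / c) 1"
  show ?thesis unfolding Gamma_eq_Lambda_def
  proof (intro exI[of _ K] conjI allI impI)
    show "K > 0" unfolding K_def by simp
    fix f :: "'a \<Rightarrow> real" assume f: "f \<in> borel_measurable lebesgue"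
    have "ennreal (C / c) \<le> ennreal K" unfolding K_def by (intro ennreal_leI) simp
    then show "Gamma_norm \<alpha> w f \<le> ennreal K * Lambda_norm w f"
      using key[OF f] by (meson mult_right_mono order_trans zero_le)
    have "Lambda_norm w f \<le> Gamma_norm \<alpha> w f" by (rule Lambda_le_Gamma[OF a])
    also have "\<dots> \<le> ennreal K * Gamma_norm \<alpha> w f"
    proof -
      have "ennreal 1 \<le> ennreal K" unfolding K_def by (intro ennreal_leI) simp
      then show ?thesis by (metis mult_1 mult_right_mono ennreal_1 zero_le)
    qed
    finally show "Lambda_norm w f \<le> ennreal K * Gamma_norm \<alpha> w f" .
  qed
qed

theorem theorem2p17:
  fixes w :: "real \<Rightarrow> real" and \<alpha> :: real
  assumes "is_weight w" and "0 < \<alpha>" and "\<alpha> < 1"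
  shows "Gamma_normable \<alpha> w TYPE('a::euclidean_space)
     \<longleftrightarrow> R1 w \<and> Gamma_eq_Lambda \<alpha> w TYPE('a)"
  using R1_if_normable[OF assms] Gamma_eq_if_normable[OF assms] normable_if[OF assms] by blast


end
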